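(* Let $\gamma,\lambda\in\mathbb{C}$ and let $u,v:\mathbb{Z}^2\to\mathbb{C}$ satisfy, for all $(l,m)\in\mathbb{Z}^2$ (with all denominators nonzero), \[ \frac{\widetilde{\overline u}}{u}=\frac{(\gamma\widetilde u-1)(\gamma-\overline u)}{(\gamma-\widetilde u)(\gamma\overline u-1)},\qquad (1-\gamma\overline u)(\lambda+\gamma\widetilde v)-(\gamma-\overline u)(\gamma-\widetilde{\overline v})u\widetilde v=0, \] \[ (\lambda+\gamma\widetilde v-u\widetilde v)(1-\gamma u+uv)+(1-\gamma^2-\lambda)uv=0,\qquad (1-\gamma u)(\lambda+\gamma v)-(\gamma-u)(\gamma-\overline v)\overline u v=0. \] Then $v$ satisfies, for all $(l,m)$, \[ \begin{aligned} &\gamma^2\big(v-\widetilde{\overline v}\big)\big(\overline v-\widetilde v\big)\big(\lambda+v\overline v\big)\big(\lambda+\widetilde v\widetilde{\overline v}\big)-(1-\gamma^2)(\gamma^2-\lambda)\big(v\overline v-\widetilde v\widetilde{\overline v}\big)^2\\ &\quad+\gamma(1-\gamma^2)\big(v\overline v-\widetilde v\widetilde{\overline v}\big)\Big(\big(\lambda+v\overline v\big)\big(\widetilde v+\widetilde{\overline v}\big)-\big(v+\overline v\big)\big(\lambda+\widetilde v\widetilde{\overline v}\big)\Big)=0. \end{aligned} \]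
   Context: Shift notation: for $f:\mathbb{Z}^2\to\mathbb{C}$, $f=f_{l,m}$, $\overline f=f_{l+1,m}$, $\widetilde f=f_{l,m+1}$, $\widetilde{\overline f}=f_{l+1,m+1}$. *)

theory Defs
  imports "HOL-Analysis.Analysis"
begin

end

theory Submission
  imports Defs
begin

definition pY_0 :: "complex \<Rightarrow> complex \<Rightarrow> complex \<Rightarrow> complex \<Rightarrow> complex \<Rightarrow> complex \<Rightarrow> complex \<Rightarrow> complex \<Rightarrow> complex" where
  "pY_0 g lam a b p q r s = (g^7*a^2*r^2 + 2*g^7*a*b*r^2 + g^7*b^2*r^2 + 2*g^6*lam*a*b*r + 2*g^6*lam*b^2*r - 2*g^6*a^2*b*r^2 - g^6*a^2*p*q*r - g^6*a^2*p*r^2 - g^6*a^2*q*r^2 - 2*g^6*a*b^2*r^2 - 2*g^6*a*b*p*r^2 - 2*g^6*a*b*q*r^2 - 2*g^6*a*r^2 + g^6*b^2*p*q*r - g^6*b^2*p*r^2 - g^6*b^2*q*r^2 - 2*g^6*b*r^2 + g^5*lam^2*b^2 - g^5*lam*a^2*q*r + g^5*lam*a^2*r^2 - 2*g^5*lam*a*b^2*r - g^5*lam*a*b*p*q - g^5*lam*a*b*p*r - 3*g^5*lam*a*b*q*r + g^5*lam*a*b*r^2 - 2*g^5*lam*a*r + g^5*lam*b^2*p*q - g^5*lam*b^2*p*r - 2*g^5*lam*b^2*q*r - 4*g^5*lam*b*r + g^5*a^2*b^2*r^2 + 2*g^5*a^2*b*p*q*r + 2*g^5*a^2*b*p*r^2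 + 2*g^5*a^2*b*q*r^2 + g^5*a^2*p^2*q*r + 2*g^5*a^2*p*q*r^2 - g^5*a^2*r^2 + 2*g^5*a*b^2*p*r^2 + 2*g^5*a*b^2*q*r^2 - g^5*a*b*p^2*q^2 + g^5*a*b*p^2*q*r - g^5*a*b*p*q^2*r + 3*g^5*a*b*p*q*r^2 + 2*g^5*a*p*r^2 + 2*g^5*a*q*r^2 - g^5*b^2*p*q^2*r + g^5*b^2*p*q*r^2 - g^5*b^2*r^2 - 2*g^5*b*p*q*r + 2*g^5*b*p*r^2 + 2*g^5*b*q*r^2 + g^5*r^2 - g^4*lam^2*a*b*q + g^4*lam^2*a*b*r - g^4*lam^2*b^2*q - 2*g^4*lam^2*b + 2*g^4*lam*a^2*b*q*r - 2*g^4*lam*a^2*b*r^2 + g^4*lam*a^2*p*q*r - g^4*lam*a^2*p*r^2)"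

definition pY_1 :: "complex \<Rightarrow> complex \<Rightarrow> complex \<Rightarrow> complex \<Rightarrow> complex \<Rightarrow> complex \<Rightarrow> complex \<Rightarrow> complex \<Rightarrow> complex" where
  "pY_1 g lam a b p q r s = (g^4*lam*a*b^2*p*q + g^4*lam*a*b^2*p*r + 3*g^4*lam*a*b^2*q*r - g^4*lam*a*b^2*r^2 - g^4*lam*a*b*p*q^2 + 4*g^4*lam*a*b*p*q*r - g^4*lam*a*b*p*r^2 + g^4*lam*a*p*q + g^4*lam*a*p*r + 3*g^4*lam*a*q*r - g^4*lam*a*r^2 - g^4*lam*b^2*p*q^2 + g^4*lam*b^2*p*q*r - 2*g^4*lam*b^2*r - 2*g^4*lam*b*p*q + 2*g^4*lam*b*p*r + 4*g^4*lam*b*q*r + 2*g^4*lam*r - g^4*a^2*b^2*p*q*r - g^4*a^2*b^2*p*r^2 - g^4*a^2*b^2*q*r^2 - 2*g^4*a^2*b*p^2*q*r - 4*g^4*a^2*b*p*q*r^2 + 2*g^4*a^2*b*r^2 - g^4*a^2*p^2*q*r^2 + g^4*a^2*p*q*r + g^4*a^2*p*r^2 + g^4*a^2*q*r^2 + g^4*a*b^2*p^2*q^2 - g^4*a*b^2*p^2*q*r + g^4*a*b^2*p*q^2*r - 3*g^4*a*b^2*p*q*r^2 + 2*g^4*a*b^2*r^2 + g^4*a*b*p^2*q^2*r - g^4*a*b*p^2*q*r^2 + g^4*a*p^2*q^2 - g^4*a*p^2*q*r + g^4*a*p*q^2*r - 3*g^4*a*p*q*r^2 + 2*g^4*a*r^2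 - g^4*b^2*p*q*r + g^4*b^2*p*r^2 + g^4*b^2*q*r^2 + 2*g^4*b*p*q^2*r - 2*g^4*b*p*q*r^2 + 2*g^4*b*r^2 + g^4*p*q*r - g^4*p*r^2 - g^4*q*r^2 + g^3*lam^2*a*b^2*q - g^3*lam^2*a*b^2*r + g^3*lam^2*a*q - g^3*lam^2*a*r - g^3*lam^2*b^2 + 2*g^3*lam^2*b*q + g^3*lam^2 - g^3*lam*a^2*b^2*q*r + g^3*lam*a^2*b^2*r^2 - 2*g^3*lam*a^2*b*p*q*r + 2*g^3*lam*a^2*b*p*r^2)"

definition pY_2 :: "complex \<Rightarrow> complex \<Rightarrow> complex \<Rightarrow> complex \<Rightarrow> complex \<Rightarrow> complex \<Rightarrow> complex \<Rightarrow> complex \<Rightarrow> complex" where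
  "pY_2 g lam a b p q r s = (g^3*lam*a*b^2*p*q^2 - 4*g^3*lam*a*b^2*p*q*r + g^3*lam*a*b^2*p*r^2 + 2*g^3*lam*a*b^2*r - 2*g^3*lam*a*b*q*r + 2*g^3*lam*a*b*r^2 + g^3*lam*a*p*q^2 - 4*g^3*lam*a*p*q*r + g^3*lam*a*p*r^2 + 2*g^3*lam*a*r - g^3*lam*b^2*p*q + g^3*lam*b^2*p*r + g^3*lam*b^2*q*r + g^3*lam*b^2*r^2 + 2*g^3*lam*b*p*q^2 - 2*g^3*lam*b*p*q*r + 4*g^3*lam*b*r + g^3*lam*p*q - g^3*lam*p*r - 2*g^3*lam*q*r + g^3*a^2*b^2*p^2*q*r + 2*g^3*a^2*b^2*p*q*r^2 - g^3*a^2*b^2*r^2 + 2*g^3*a^2*b*p^2*q*r^2 - 2*g^3*a^2*b*p*q*r - 2*g^3*a^2*b*p*r^2 - 2*g^3*a^2*b*q*r^2 - g^3*a^2*p^2*q*r - g^3*a^2*p*q^2*r - g^3*a^2*p*q*r^2 - g^3*a*b^2*p^2*q^2*r + g^3*a*b^2*p^2*q*r^2 - 2*g^3*a*b^2*p*r^2 - 2*g^3*a*b^2*q*r^2 - 2*g^3*a*b*p*q^2*r + 2*g^3*a*b*p*q*r^2 - 2*g^3*a*b*r^2 - g^3*a*p^2*q^2*r + g^3*a*p^2*q*r^2 - 2*g^3*a*p*r^2 - 2*g^3*a*q*r^2 + 2*g^3*b*p*q*r - 2*g^3*b*p*r^2 - 2*g^3*b*q*r^2 - g^3*p*q^2*r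 + g^3*p*q*r^2 - g^3*r^2 - g^2*lam^2*a*b*q + g^2*lam^2*a*b*r + g^2*lam^2*b^2*r + 2*g^2*lam^2*b - g^2*lam^2*q + g^2*lam*a^2*b^2*p*q*r - g^2*lam*a^2*b^2*p*r^2 - g^2*lam*a*b^2*p*q - g^2*lam*a*b^2*p*r - g^2*lam*a*b^2*q*r - g^2*lam*a*b^2*r^2 - g^2*lam*a*b*p*q^2 + 2*g^2*lam*a*b*p*q*r)"

definition pY_3 :: "complex \<Rightarrow> complex \<Rightarrow> complex \<Rightarrow> complex \<Rightarrow> complex \<Rightarrow> complex \<Rightarrow> complex \<Rightarrow> complex \<Rightarrow> complex" where
  "pY_3 g lam a b p q r s = (0 - g^2*lam*a*b*p*r^2 - 2*g^2*lam*a*b*r - g^2*lam*a*p*q - g^2*lam*a*p*r - g^2*lam*a*q*r - g^2*lam*a*r^2 + 2*g^2*lam*b*p*q - 2*g^2*lam*b*p*r - 2*g^2*lam*b*q*r - 2*g^2*lam*b*r^2 - g^2*lam*p*q^2 + g^2*lam*p*q*r - 2*g^2*lam*r - g^2*a^2*b^2*p^2*q*r^2 + g^2*a^2*b^2*p*q*r + g^2*a^2*b^2*p*r^2 + g^2*a^2*b^2*q*r^2 + 2*g^2*a^2*b*p^2*q*r + 2*g^2*a^2*b*p*q^2*r + 2*g^2*a^2*b*p*q*r^2 + g^2*a^2*p^2*q^2*r - g^2*a*b^2*p^2*q^2 + g^2*a*b^2*p^2*q*r + g^2*a*b^2*p*q^2*r + g^2*a*b^2*p*q*r^2 + g^2*a*b*p^2*q^2*r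 - g^2*a*b*p^2*q*r^2 + 2*g^2*a*b*p*r^2 + 2*g^2*a*b*q*r^2 - g^2*a*p^2*q^2 + g^2*a*p^2*q*r + g^2*a*p*q^2*r + g^2*a*p*q*r^2 - g^2*p*q*r + g^2*p*r^2 + g^2*q*r^2 - 2*g*lam^2*b*r - g*lam^2 + 2*g*lam*a*b^2*p*q*r + g*lam*a*b*p*q + g*lam*a*b*p*r + g*lam*a*b*q*r + g*lam*a*b*r^2 + 2*g*lam*a*p*q*r - g*lam*p*q + g*lam*p*r + g*lam*q*r + g*lam*r^2 - g*a^2*b^2*p^2*q*r - g*a^2*b^2*p*q^2*r - g*a^2*b^2*p*q*r^2 - 2*g*a^2*b*p^2*q^2*r + g*a*b*p^2*q^2 - g*a*b*p^2*q*r - g*a*b*p*q^2*r - g*a*b*p*q*r^2 + lam^2*r - 2*lam*a*b*p*q*r + a^2*b^2*p^2*q^2*r)"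

definition pZ_0 :: "complex \<Rightarrow> complex \<Rightarrow> complex \<Rightarrow> complex \<Rightarrow> complex \<Rightarrow> complex \<Rightarrow> complex \<Rightarrow> complex \<Rightarrow> complex" where
  "pZ_0 g lam a b p q r s = (0 - g^6*a^3*b*p^2 - 2*g^6*a^3*b*p*r - g^6*a^3*b*r^2 - 2*g^6*a^2*b^2*p^2 - 4*g^6*a^2*b^2*p*r - 2*g^6*a^2*b^2*r^2 - g^6*a*b^3*p^2 - 2*g^6*a*b^3*p*r - g^6*a*b^3*r^2 - 2*g^5*lam*a^3*b*p - 2*g^5*lam*a^3*b*r - 4*g^5*lam*a^2*b^2*p - 4*g^5*lam*a^2*b^2*r - 2*g^5*lam*a*b^3*p - 2*g^5*lam*a*b^3*r + g^5*a^4*b*p*r + g^5*a^4*b*r^2 + 3*g^5*a^3*b^2*p^2 + 7*g^5*a^3*b^2*p*r + 4*g^5*a^3*b^2*r^2 + 2*g^5*a^3*b*p^2*r + 2*g^5*a^3*b*p*r^2 + g^5*a^3*p^2 + g^5*a^3*p*r + 4*g^5*a^2*b^3*p^2 + 7*g^5*a^2*b^3*p*r + 3*g^5*a^2*b^3*r^2 + 4*g^5*a^2*b^2*p^2*r + 4*g^5*a^2*b^2*p*r^2 + 4*g^5*a^2*b*p^2 + 7*g^5*a^2*b*p*r + 3*g^5*a^2*b*r^2 + g^5*a*b^4*p^2 + g^5*a*b^4*p*r + 2*g^5*a*b^3*p^2*r + 2*g^5*a*b^3*p*r^2 + 3*g^5*a*b^2*p^2 + 7*g^5*a*b^2*p*r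 + 4*g^5*a*b^2*r^2 + g^5*b^3*p*r + g^5*b^3*r^2 - g^4*lam^2*a^3*b - 2*g^4*lam^2*a^2*b^2 - g^4*lam^2*a*b^3 + g^4*lam*a^4*b*r + 5*g^4*lam*a^3*b^2*p + 6*g^4*lam*a^3*b^2*r + 2*g^4*lam*a^3*b*p*r + 2*g^4*lam*a^3*p + g^4*lam*a^3*r + 6*g^4*lam*a^2*b^3*p + 5*g^4*lam*a^2*b^3*r + 4*g^4*lam*a^2*b^2*p*r + 9*g^4*lam*a^2*b*p + 8*g^4*lam*a^2*b*r + g^4*lam*a*b^4*p + 2*g^4*lam*a*b^3*p*r + 8*g^4*lam*a*b^2*p + 9*g^4*lam*a*b^2*r + g^4*lam*b^3*p)"

definition pZ_1 :: "complex \<Rightarrow> complex \<Rightarrow> complex \<Rightarrow> complex \<Rightarrow> complex \<Rightarrow> complex \<Rightarrow> complex \<Rightarrow> complex \<Rightarrow> complex" where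
  "pZ_1 g lam a b p q r s = (2*g^4*lam*b^3*r - 3*g^4*a^4*b^2*p*r - 2*g^4*a^4*b^2*r^2 - g^4*a^4*b*p^2*r - 2*g^4*a^4*b*p*r^2 - g^4*a^4*p*r - 3*g^4*a^3*b^3*p^2 - 8*g^4*a^3*b^3*p*r - 3*g^4*a^3*b^3*r^2 - 8*g^4*a^3*b^2*p^2*r - 9*g^4*a^3*b^2*p*r^2 - g^4*a^3*b*p^2*r^2 - 2*g^4*a^3*b*p^2 - 6*g^4*a^3*b*p*r - 2*g^4*a^3*b*r^2 - g^4*a^3*p^2*r - 2*g^4*a^2*b^4*p^2 - 3*g^4*a^2*b^4*p*r - 9*g^4*a^2*b^3*p^2*r - 8*g^4*a^2*b^3*p*r^2 - 2*g^4*a^2*b^2*p^2*r^2 - 6*g^4*a^2*b^2*p^2 - 14*g^4*a^2*b^2*p*r - 6*g^4*a^2*b^2*r^2 - 6*g^4*a^2*b*p^2*r - 5*g^4*a^2*b*p*r^2 - 2*g^4*a^2*p^2 - 3*g^4*a^2*p*r - 2*g^4*a*b^4*p^2*r - g^4*a*b^4*p*r^2 - g^4*a*b^3*p^2*r^2 - 2*g^4*a*b^3*p^2 - 6*g^4*a*b^3*p*r - 2*g^4*a*b^3*r^2 - 5*g^4*a*b^2*p^2*r - 6*g^4*a*b^2*p*r^2 - 3*g^4*a*b*p^2 - 8*g^4*a*b*p*r - 3*g^4*a*b*r^2 - g^4*b^4*p*r - g^4*b^3*p*r^2 - 3*g^4*b^2*p*r - 2*g^4*b^2*r^2 + 2*g^3*lam^2*a^3*b^2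 + g^3*lam^2*a^3 + 2*g^3*lam^2*a^2*b^3 + 5*g^3*lam^2*a^2*b + 5*g^3*lam^2*a*b^2 + g^3*lam^2*b^3 - 2*g^3*lam*a^4*b^2*r - g^3*lam*a^4*b*p*r - g^3*lam*a^4*r - 4*g^3*lam*a^3*b^3*p - 4*g^3*lam*a^3*b^3*r - 7*g^3*lam*a^3*b^2*p*r - 4*g^3*lam*a^3*b*p - 6*g^3*lam*a^3*b*r - g^3*lam*a^3*p*r - 2*g^3*lam*a^2*b^4*p - 7*g^3*lam*a^2*b^3*p*r)"

definition pZ_2 :: "complex \<Rightarrow> complex \<Rightarrow> complex \<Rightarrow> complex \<Rightarrow> complex \<Rightarrow> complex \<Rightarrow> complex \<Rightarrow> complex \<Rightarrow> complex" where
  "pZ_2 g lam a b p q r s = (0 - 13*g^3*lam*a^2*b^2*p - 13*g^3*lam*a^2*b^2*r - 7*g^3*lam*a^2*b*p*r - 5*g^3*lam*a^2*p - 3*g^3*lam*a^2*r - g^3*lam*a*b^4*p*r - 6*g^3*lam*a*b^3*p - 4*g^3*lam*a*b^3*r - 7*g^3*lam*a*b^2*p*r - 10*g^3*lam*a*b*p - 10*g^3*lam*a*b*r - g^3*lam*b^4*p - g^3*lam*b^3*p*r - 3*g^3*lam*b^2*p - 5*g^3*lam*b^2*r + 3*g^3*a^4*b^3*p*r + g^3*a^4*b^3*r^2 + 3*g^3*a^4*b^2*p^2*r + 5*g^3*a^4*b^2*p*r^2 + g^3*a^4*b*p^2*r^2 + 3*g^3*a^4*b*p*r - g^3*a^4*b*r^2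 + g^3*a^4*p^2*r + g^3*a^3*b^4*p^2 + 3*g^3*a^3*b^4*p*r + 10*g^3*a^3*b^3*p^2*r + 10*g^3*a^3*b^3*p*r^2 + 5*g^3*a^3*b^2*p^2*r^2 + 10*g^3*a^3*b^2*p*r + 6*g^3*a^3*b*p^2*r + 4*g^3*a^3*b*p*r^2 - g^3*a^3*p^2 + 3*g^3*a^3*p*r + 5*g^3*a^2*b^4*p^2*r + 3*g^3*a^2*b^4*p*r^2 + 5*g^3*a^2*b^3*p^2*r^2 + 10*g^3*a^2*b^3*p*r + 13*g^3*a^2*b^2*p^2*r + 13*g^3*a^2*b^2*p*r^2 + 2*g^3*a^2*b*p^2*r^2 + 10*g^3*a^2*b*p*r + 2*g^3*a^2*p^2*r + g^3*a*b^4*p^2*r^2 - g^3*a*b^4*p^2 + 3*g^3*a*b^4*p*r + 4*g^3*a*b^3*p^2*r + 6*g^3*a*b^3*p*r^2 + 2*g^3*a*b^2*p^2*r^2 + 10*g^3*a*b^2*p*r + 4*g^3*a*b*p^2*r + 4*g^3*a*b*p*r^2 + g^3*a*p^2 + 3*g^3*a*p*r + g^3*b^4*p*r^2 + 3*g^3*b^3*p*r - g^3*b^3*r^2 + 2*g^3*b^2*p*r^2 + 3*g^3*b*p*r + g^3*b*r^2 - g^2*lam^2*a^3*b^3)"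

definition pZ_3 :: "complex \<Rightarrow> complex \<Rightarrow> complex \<Rightarrow> complex \<Rightarrow> complex \<Rightarrow> complex \<Rightarrow> complex \<Rightarrow> complex \<Rightarrow> complex" where
  "pZ_3 g lam a b p q r s = (0 - 2*g^2*lam^2*a^3*b - 6*g^2*lam^2*a^2*b^2 - 3*g^2*lam^2*a^2 - 2*g^2*lam^2*a*b^3 - 7*g^2*lam^2*a*b - 3*g^2*lam^2*b^2 + g^2*lam*a^4*b^3*r + 2*g^2*lam*a^4*b^2*p*r + 2*g^2*lam*a^4*b*r + g^2*lam*a^4*p*r + g^2*lam*a^3*b^4*p + 6*g^2*lam*a^3*b^3*p*r + 2*g^2*lam*a^3*b^2*p + 5*g^2*lam*a^3*b^2*r + 6*g^2*lam*a^3*b*p*r - g^2*lam*a^3*p + 3*g^2*lam*a^3*r + 2*g^2*lam*a^2*b^4*p*r + 5*g^2*lam*a^2*b^3*p + 2*g^2*lam*a^2*b^3*r + 14*g^2*lam*a^2*b^2*p*r + 5*g^2*lam*a^2*b*p + 8*g^2*lam*a^2*b*r + 2*g^2*lam*a^2*p*r + 2*g^2*lam*a*b^4*p + 6*g^2*lam*a*b^3*p*r + 8*g^2*lam*a*b^2*p + 5*g^2*lam*a*b^2*r + 6*g^2*lam*a*b*p*r + 4*g^2*lam*a*p + 3*g^2*lam*a*r + g^2*lam*b^4*p*r + 3*g^2*lam*b^3*p - g^2*lam*b^3*r + 2*g^2*lam*b^2*p*r + 3*g^2*lam*b*p + 4*g^2*lam*b*r - g^2*a^4*b^4*p*r - 3*g^2*a^4*b^3*p^2*r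 - 4*g^2*a^4*b^3*p*r^2 - 3*g^2*a^4*b^2*p^2*r^2 - 3*g^2*a^4*b^2*p*r + 2*g^2*a^4*b^2*r^2 - 3*g^2*a^4*b*p^2*r + g^2*a^4*b*p*r^2 - 4*g^2*a^3*b^4*p^2*r - 3*g^2*a^3*b^4*p*r^2 - 7*g^2*a^3*b^3*p^2*r^2 + 2*g^2*a^3*b^3*p^2 - 6*g^2*a^3*b^3*p*r + 2*g^2*a^3*b^3*r^2 - 8*g^2*a^3*b^2*p^2*r - 5*g^2*a^3*b^2*p*r^2 - 2*g^2*a^3*b*p^2*r^2 + 3*g^2*a^3*b*p^2 - 8*g^2*a^3*b*p*r + 3*g^2*a^3*b*r^2 - 2*g^2*a^3*p^2*r - 3*g^2*a^2*b^4*p^2*r^2 + 2*g^2*a^2*b^4*p^2)"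

definition pZ_4 :: "complex \<Rightarrow> complex \<Rightarrow> complex \<Rightarrow> complex \<Rightarrow> complex \<Rightarrow> complex \<Rightarrow> complex \<Rightarrow> complex \<Rightarrow> complex" where
  "pZ_4 g lam a b p q r s = (0 - 3*g^2*a^2*b^4*p*r - 5*g^2*a^2*b^3*p^2*r - 8*g^2*a^2*b^3*p*r^2 - 6*g^2*a^2*b^2*p^2*r^2 + 6*g^2*a^2*b^2*p^2 - 14*g^2*a^2*b^2*p*r + 6*g^2*a^2*b^2*r^2 - 5*g^2*a^2*b*p^2*r - 2*g^2*a^2*b*p*r^2 + 2*g^2*a^2*p^2 - 3*g^2*a^2*p*r + g^2*a*b^4*p^2*r - 3*g^2*a*b^4*p*r^2 - 2*g^2*a*b^3*p^2*r^2 + 3*g^2*a*b^3*p^2 - 8*g^2*a*b^3*p*r + 3*g^2*a*b^3*r^2 - 2*g^2*a*b^2*p^2*r - 5*g^2*a*b^2*p*r^2 - g^2*a*b*p^2*r^2 + 2*g^2*a*b*p^2 - 6*g^2*a*b*p*r + 2*g^2*a*b*r^2 - g^2*a*p^2*r - 2*g^2*b^3*p*r^2 - 3*g^2*b^2*p*r + 2*g^2*b^2*r^2 - g^2*b*p*r^2 - g^2*p*r + g*lam^2*a^3*b^2 + g*lam^2*a^2*b^3 + 4*g*lam^2*a^2*b + 4*g*lam^2*a*b^2 + 3*g*lam^2*a + 3*g*lam^2*b - g*lam*a^4*b^3*p*r - g*lam*a^4*b^2*r - 2*g*lam*a^4*b*p*r - g*lam*a^3*b^4*p*r - 5*g*lam*a^3*b^2*p*r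 + 2*g*lam*a^3*b*p - 4*g*lam*a^3*b*r - 2*g*lam*a^3*p*r - g*lam*a^2*b^4*p - 5*g*lam*a^2*b^3*p*r - g*lam*a^2*b^2*p - g*lam*a^2*b^2*r - 5*g*lam*a^2*b*p*r + 2*g*lam*a^2*p - 3*g*lam*a^2*r - 2*g*lam*a*b^4*p*r - 4*g*lam*a*b^3*p + 2*g*lam*a*b^3*r - 5*g*lam*a*b^2*p*r - 2*g*lam*a*b*p - 2*g*lam*a*b*r - g*lam*a*p*r - 2*g*lam*b^3*p*r - 3*g*lam*b^2*p + 2*g*lam*b^2*r)"

definition pZ_5 :: "complex \<Rightarrow> complex \<Rightarrow> complex \<Rightarrow> complex \<Rightarrow> complex \<Rightarrow> complex \<Rightarrow> complex \<Rightarrow> complex \<Rightarrow> complex" where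
  "pZ_5 g lam a b p q r s = (0 - g*lam*b*p*r - g*lam*p - g*lam*r + g*a^4*b^4*p^2*r + g*a^4*b^4*p*r^2 + 3*g*a^4*b^3*p^2*r^2 + g*a^4*b^3*p*r - g*a^4*b^3*r^2 + 3*g*a^4*b^2*p^2*r - 2*g*a^4*b^2*p*r^2 + 3*g*a^3*b^4*p^2*r^2 - g*a^3*b^4*p^2 + g*a^3*b^4*p*r + 2*g*a^3*b^3*p^2*r + 2*g*a^3*b^3*p*r^2 + 4*g*a^3*b^2*p^2*r^2 - 3*g*a^3*b^2*p^2 + 7*g*a^3*b^2*p*r - 4*g*a^3*b^2*r^2 + 4*g*a^3*b*p^2*r - 2*g*a^3*b*p*r^2 - 2*g*a^2*b^4*p^2*r + 3*g*a^2*b^4*p*r^2 + 4*g*a^2*b^3*p^2*r^2 - 4*g*a^2*b^3*p^2 + 7*g*a^2*b^3*p*r - 3*g*a^2*b^3*r^2 + g*a^2*b^2*p^2*r + g*a^2*b^2*p*r^2 + g*a^2*b*p^2*r^2 - 4*g*a^2*b*p^2 + 7*g*a^2*b*p*r - 3*g*a^2*b*r^2 + g*a^2*p^2*r - 2*g*a*b^3*p^2*r + 4*g*a*b^3*p*r^2 + g*a*b^2*p^2*r^2 - 3*g*a*b^2*p^2 + 7*g*a*b^2*p*r - 4*g*a*b^2*r^2 - g*a*p^2 + g*a*p*r + g*b^2*p*r^2 + g*b*p*r - g*b*r^2 - lam^2*a^2*b^2 - 2*lam^2*a*b - lam^2 + lam*a^4*b^2*p*r - lam*a^3*b^2*p +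 lam*a^3*b^2*r + 2*lam*a^3*b*p*r + lam*a^2*b^4*p*r + lam*a^2*b^3*p - lam*a^2*b^3*r - 2*lam*a^2*b*p + 2*lam*a^2*b*r + lam*a^2*p*r + 2*lam*a*b^3*p*r + 2*lam*a*b^2*p)"

definition pZ_6 :: "complex \<Rightarrow> complex \<Rightarrow> complex \<Rightarrow> complex \<Rightarrow> complex \<Rightarrow> complex \<Rightarrow> complex \<Rightarrow> complex \<Rightarrow> complex" where
  "pZ_6 g lam a b p q r s = (0 - 2*lam*a*b^2*r - lam*a*p + lam*a*r + lam*b^2*p*r + lam*b*p - lam*b*r - a^4*b^4*p^2*r^2 - a^4*b^3*p^2*r + a^4*b^3*p*r^2 + a^3*b^4*p^2*r - a^3*b^4*p*r^2 - 2*a^3*b^3*p^2*r^2 + a^3*b^3*p^2 - 2*a^3*b^3*p*r + a^3*b^3*r^2 - 2*a^3*b^2*p^2*r + 2*a^3*b^2*p*r^2 + 2*a^2*b^3*p^2*r - 2*a^2*b^3*p*r^2 - a^2*b^2*p^2*r^2 + 2*a^2*b^2*p^2 - 4*a^2*b^2*p*r + 2*a^2*b^2*r^2 - a^2*b*p^2*r + a^2*b*p*r^2 + a*b^2*p^2*r - a*b^2*p*r^2 + a*b*p^2 - 2*a*b*p*r + a*b*r^2)"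

definition pC_0 :: "complex \<Rightarrow> complex \<Rightarrow> complex \<Rightarrow> complex \<Rightarrow> complex \<Rightarrow> complex \<Rightarrow> complex \<Rightarrow> complex \<Rightarrow> complex" where
  "pC_0 g lam a b p q r s = (g^6*a*r^3 + g^6*b*r^3 + g^5*lam*a*r^2 + 2*g^5*lam*b*r^2 - g^5*a*b*r^3 - g^5*a*p*q*r^2 - g^5*a*p*r^3 - g^5*a*q*r^3 + g^5*a*r^3* s + g^5*b*p*q*r^2 - g^5*b*p*r^3 - g^5*b*q*r^3 - g^5*r^3 + g^4*lam^2*b*r - g^4*lam*a*b*r^2 - g^4*lam*a*p*q*r - g^4*lam*a*p*r^2 - 2*g^4*lam*a*q*r^2 + g^4*lam*a*r^3 + g^4*lam*a*r^2* s + g^4*lam*b*p*q*r - g^4*lam*b*p*r^2 - 2*g^4*lam*b*q*r^2 - 2*g^4*lam*r^2 + g^4*a*b*p*q*r^2 + g^4*a*b*p*r^3 + g^4*a*b*q*r^3 - g^4*a*b*r^3* s - g^4*a*p^2*q^2*r + g^4*a*p^2*q*r^2 + 2*g^4*a*p*q*r^3 + g^4*a*p*q*r^2* s - g^4*a*p*r^3* s - g^4*a*q*r^3* s - g^4*a*r^3 - g^4*b*p*q^2*r^2 + g^4*b*p*q*r^3 - g^4*b*r^3 - g^4*p*q*r^2 + g^4*p*r^3 + g^4*q*r^3 - g^3*lam^2*a*q*r + g^3*lam^2*a*r^2 - g^3*lam^2*b*q*r - g^3*lam^2*r + g^3*lam*a*b*p*q*r + g^3*lam*a*b*p*r^2 +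 2*g^3*lam*a*b*q*r^2 - g^3*lam*a*b*r^3 - g^3*lam*a*b*r^2* s - g^3*lam*a*p*q^2*r + 4*g^3*lam*a*p*q*r^2 - g^3*lam*a*p*r^3 - g^3*lam*a*q*r^2* s - g^3*lam*a*r^2 - g^3*lam*b*p*q^2*r + g^3*lam*b*p*q*r^2 - 2*g^3*lam*b*r^2 - g^3*lam*p*q*r + g^3*lam*p*r^2)"

definition pC_1 :: "complex \<Rightarrow> complex \<Rightarrow> complex \<Rightarrow> complex \<Rightarrow> complex \<Rightarrow> complex \<Rightarrow> complex \<Rightarrow> complex \<Rightarrow> complex" where
  "pC_1 g lam a b p q r s = (2*g^3*lam*q*r^2 + g^3*a*b*p^2*q^2*r - g^3*a*b*p^2*q*r^2 - 2*g^3*a*b*p*q*r^3 - g^3*a*b*p*q*r^2* s + g^3*a*b*p*r^3* s + g^3*a*b*q*r^3* s + g^3*a*b*r^3 + g^3*a*p^2*q^2*r^2 - g^3*a*p^2*q*r^3 - g^3*a*p*q^2*r^2* s + g^3*a*p*q*r^3* s + g^3*a*p*q*r^2 + g^3*a*p*r^3 + g^3*a*q*r^3 - g^3*a*r^3* s - g^3*b*p*q*r^2 + g^3*b*p*r^3 + g^3*b*q*r^3 + g^3*p*q^2*r^2 - g^3*p*q*r^3 + g^3*r^3 + g^2*lam^2*a*b*q*r - g^2*lam^2*a*b*r^2 - g^2*lam^2*b*r + g^2*lam^2*q*r + g^2*lam*a*b*p*q^2*r - 4*g^2*lam*a*b*p*q*r^2 + g^2*lam*a*b*p*r^3 + g^2*lam*a*b*q*r^2*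 s + g^2*lam*a*b*r^2 + g^2*lam*a*p*q*r + g^2*lam*a*p*r^2 + g^2*lam*a*q*r^2 - g^2*lam*a*r^2* s - g^2*lam*b*p*q*r + g^2*lam*b*p*r^2 + g^2*lam*b*q*r^2 + g^2*lam*b*r^3 + g^2*lam*p*q^2*r - g^2*lam*p*q*r^2 + 2*g^2*lam*r^2 - g^2*a*b*p^2*q^2*r^2 + g^2*a*b*p^2*q*r^3 + g^2*a*b*p*q^2*r^2* s - g^2*a*b*p*q*r^3* s - g^2*a*b*p*q*r^2 - g^2*a*b*p*r^3 - g^2*a*b*q*r^3 + g^2*a*b*r^3* s + g^2*a*p^2*q^2*r - g^2*a*p^2*q*r^2 - g^2*a*p*q^2*r^2 - g^2*a*p*q*r^3 - g^2*a*p*q*r^2* s + g^2*a*p*r^3* s + g^2*a*q*r^3* s + g^2*p*q*r^2 - g^2*p*r^3 - g^2*q*r^3)"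

definition pC_2 :: "complex \<Rightarrow> complex \<Rightarrow> complex \<Rightarrow> complex \<Rightarrow> complex \<Rightarrow> complex \<Rightarrow> complex \<Rightarrow> complex \<Rightarrow> complex" where
  "pC_2 g lam a b p q r s = (g*lam^2*b*r^2 + g*lam^2*r - g*lam*a*b*p*q*r - g*lam*a*b*p*r^2 - g*lam*a*b*q*r^2 + g*lam*a*b*r^2* s - 2*g*lam*a*p*q*r^2 + g*lam*a*r^3* s + g*lam*p*q*r - g*lam*p*r^2 - g*lam*q*r^2 - g*lam*r^3 - g*a*b*p^2*q^2*r + g*a*b*p^2*q*r^2 + g*a*b*p*q^2*r^2 + g*a*b*p*q*r^3 + g*a*b*p*q*r^2* s - g*a*b*p*r^3* s - g*a*b*q*r^3* s - lam^2*r^2 + 2*lam*a*b*p*q*r^2 - lam*a*b*r^3* s)"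

definition pD_0 :: "complex \<Rightarrow> complex \<Rightarrow> complex \<Rightarrow> complex \<Rightarrow> complex \<Rightarrow> complex \<Rightarrow> complex \<Rightarrow> complex \<Rightarrow> complex" where
  "pD_0 g lam a b p q r s = (0 - g^7*a^2*b*p^3 - 2*g^7*a^2*b*p^2*r - g^7*a^2*b*p*r^2 - g^7*a*b^2*p^3 - 2*g^7*a*b^2*p^2*r - 2*g^7*a*b^2*p*r^2 - g^7*b^3*p*r^2 - 2*g^6*lam*a^2*b*p^2 - 2*g^6*lam*a^2*b*p*r - 3*g^6*lam*a*b^2*p^2 - 4*g^6*lam*a*b^2*p*r - 2*g^6*lam*b^3*p*r + g^6*a^3*b*p^2*r + g^6*a^3*b*p*r^2 + 2*g^6*a^2*b^2*p^3 + 4*g^6*a^2*b^2*p^2*r + 4*g^6*a^2*b^2*p*r^2 + 2*g^6*a^2*b*p^3*r + 2*g^6*a^2*b*p^2*r^2 + g^6*a^2*p^3 + g^6*a^2*p^2*r + g^6*a*b^3*p^3 + g^6*a*b^3*p^2*r + 3*g^6*a*b^3*p*r^2 - g^6*a*b^2*p^3*q + 2*g^6*a*b^2*p^3*r - g^6*a*b^2*p^2*q*r + 3*g^6*a*b^2*p^2*r^2 + 2*g^6*a*b*p^3 + 4*g^6*a*b*p^2*r + 2*g^6*a*b*p*r^2 - g^6*b^3*p^2*q*r + g^6*b^3*p^2*r^2 + g^6*b^2*p^2*r + 2*g^6*b^2*p*r^2 - g^5*lam^2*a^2*b*p - 2*g^5*lam^2*a*b^2*p - g^5*lam^2*b^3*p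 + g^5*lam*a^3*b*p*r + 4*g^5*lam*a^2*b^2*p^2 + 6*g^5*lam*a^2*b^2*p*r + 2*g^5*lam*a^2*b*p^2*r + 2*g^5*lam*a^2*p^2 + g^5*lam*a^2*p*r + 2*g^5*lam*a*b^3*p^2 + 5*g^5*lam*a*b^3*p*r - g^5*lam*a*b^2*p^2*q + 4*g^5*lam*a*b^2*p^2*r + 6*g^5*lam*a*b*p^2 + 6*g^5*lam*a*b*p*r - g^5*lam*b^3*p^2*q + g^5*lam*b^3*p^2*r + g^5*lam*b^2*p^2 + 5*g^5*lam*b^2*p*r - 2*g^5*a^3*b^2*p^2*r - 2*g^5*a^3*b^2*p*r^2 - g^5*a^3*b*p^3*r - 2*g^5*a^3*b*p^2*r^2 - g^5*a^3*p^2*r - g^5*a^2*b^3*p^3)"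

definition pD_1 :: "complex \<Rightarrow> complex \<Rightarrow> complex \<Rightarrow> complex \<Rightarrow> complex \<Rightarrow> complex \<Rightarrow> complex \<Rightarrow> complex \<Rightarrow> complex" where
  "pD_1 g lam a b p q r s = (0 - 2*g^5*a^2*b^3*p^2*r - 3*g^5*a^2*b^3*p*r^2 + g^5*a^2*b^2*p^3*q - 5*g^5*a^2*b^2*p^3*r + g^5*a^2*b^2*p^2*q*r - 7*g^5*a^2*b^2*p^2*r^2 - g^5*a^2*b*p^3*r^2 - g^5*a^2*b*p^3 - 3*g^5*a^2*b*p^2*r - g^5*a^2*b*p*r^2 - g^5*a^2*p^3*r + g^5*a*b^3*p^3*q - 2*g^5*a*b^3*p^3*r + 2*g^5*a*b^3*p^2*q*r - 4*g^5*a*b^3*p^2*r^2 + g^5*a*b^2*p^3*q*r - g^5*a*b^2*p^3*r^2 - g^5*a*b^2*p^3 - 3*g^5*a*b^2*p^2*r - 2*g^5*a*b^2*p*r^2 + g^5*a*b*p^3*q - 3*g^5*a*b*p^3*r + g^5*a*b*p^2*q*r - 3*g^5*a*b*p^2*r^2 - g^5*a*p^3 - 2*g^5*a*p^2*r - g^5*b^3*p^2*r + g^5*b^3*p*r^2 + 2*g^5*b^2*p^2*q*r - 2*g^5*b^2*p^2*r^2 - 2*g^5*b*p^2*r - g^5*b*p*r^2 + 2*g^4*lam^2*a^2*b^2*p + g^4*lam^2*a^2*p + 2*g^4*lam^2*a*b^3*p + 4*g^4*lam^2*a*b*p + 3*g^4*lam^2*b^2*p - 2*g^4*lam*a^3*b^2*p*r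 - g^4*lam*a^3*b*p^2*r - g^4*lam*a^3*p*r - 2*g^4*lam*a^2*b^3*p^2 - 4*g^4*lam*a^2*b^3*p*r + g^4*lam*a^2*b^2*p^2*q - 7*g^4*lam*a^2*b^2*p^2*r - 3*g^4*lam*a^2*b*p^2 - 5*g^4*lam*a^2*b*p*r - g^4*lam*a^2*p^2*r + 2*g^4*lam*a*b^3*p^2*q - 5*g^4*lam*a*b^3*p^2*r - 3*g^4*lam*a*b^2*p^2 - 7*g^4*lam*a*b^2*p*r + g^4*lam*a*b*p^2*q - 5*g^4*lam*a*b*p^2*r - 3*g^4*lam*a*p^2 - 2*g^4*lam*a*p*r - g^4*lam*b^3*p^2 + g^4*lam*b^3*p*r + 2*g^4*lam*b^2*p^2*q - 2*g^4*lam*b^2*p^2*r - 2*g^4*lam*b*p^2)"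

definition pD_2 :: "complex \<Rightarrow> complex \<Rightarrow> complex \<Rightarrow> complex \<Rightarrow> complex \<Rightarrow> complex \<Rightarrow> complex \<Rightarrow> complex \<Rightarrow> complex" where
  "pD_2 g lam a b p q r s = (0 - 4*g^4*lam*b*p*r + g^4*a^3*b^3*p^2*r + g^4*a^3*b^3*p*r^2 + 2*g^4*a^3*b^2*p^3*r + 4*g^4*a^3*b^2*p^2*r^2 + g^4*a^3*b*p^3*r^2 + 2*g^4*a^3*b*p^2*r - g^4*a^3*b*p*r^2 + g^4*a^3*p^3*r - g^4*a^2*b^3*p^3*q + 3*g^4*a^2*b^3*p^3*r - g^4*a^2*b^3*p^2*q*r + 5*g^4*a^2*b^3*p^2*r^2 - g^4*a^2*b^2*p^3*q*r + 3*g^4*a^2*b^2*p^3*r^2 - g^4*a^2*b^2*p^3 + 3*g^4*a^2*b^2*p^2*r - 2*g^4*a^2*b^2*p*r^2 - g^4*a^2*b*p^3*q + 3*g^4*a^2*b*p^3*r - 2*g^4*a^2*b*p^2*q*r + 2*g^4*a^2*b*p^2*r^2 - g^4*a^2*p^3 + 2*g^4*a^2*p^2*r - g^4*a*b^3*p^3*q*r + g^4*a*b^3*p^3*r^2 - g^4*a*b^3*p^3 + 2*g^4*a*b^3*p^2*r - 3*g^4*a*b^3*p*r^2 + 2*g^4*a*b^2*p^3*r - 4*g^4*a*b^2*p^2*q*r + 4*g^4*a*b^2*p^2*r^2 - g^4*a*b*p^3*q*r + g^4*a*b*p^3*r^2 - g^4*a*b*p^3 + 3*g^4*a*b*p^2*r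 - g^4*a*b*p*r^2 + g^4*a*p^3*r + 2*g^4*b^2*p^2*r - 2*g^4*b^2*p*r^2 - g^4*b*p^2*q*r + g^4*b*p^2*r^2 + g^4*p^2*r - g^3*lam^2*a^2*b^3*p - 2*g^3*lam^2*a^2*b*p - 4*g^3*lam^2*a*b^2*p - 2*g^3*lam^2*a*p - 3*g^3*lam^2*b*p + g^3*lam*a^3*b^3*p*r + 2*g^3*lam*a^3*b^2*p^2*r + 2*g^3*lam*a^3*b*p*r + g^3*lam*a^3*p^2*r - g^3*lam*a^2*b^3*p^2*q + 5*g^3*lam*a^2*b^3*p^2*r + 3*g^3*lam*a^2*b^2*p*r - g^3*lam*a^2*b*p^2*q + 5*g^3*lam*a^2*b*p^2*r - g^3*lam*a^2*p^2 + 2*g^3*lam*a^2*p*r - 2*g^3*lam*a*b^3*p*r)"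

definition pD_3 :: "complex \<Rightarrow> complex \<Rightarrow> complex \<Rightarrow> complex \<Rightarrow> complex \<Rightarrow> complex \<Rightarrow> complex \<Rightarrow> complex \<Rightarrow> complex" where
  "pD_3 g lam a b p q r s = (0 - 3*g^3*lam*a*b^2*p^2*q + 5*g^3*lam*a*b^2*p^2*r + 3*g^3*lam*a*b*p*r + g^3*lam*a*p^2*r + 2*g^3*lam*b^2*p^2 - 2*g^3*lam*b^2*p*r - g^3*lam*b*p^2*q + g^3*lam*b*p^2*r + g^3*lam*p^2 + g^3*lam*p*r - g^3*a^3*b^3*p^3*r - 2*g^3*a^3*b^3*p^2*r^2 - 2*g^3*a^3*b^2*p^3*r^2 - g^3*a^3*b^2*p^2*r + 2*g^3*a^3*b^2*p*r^2 - 2*g^3*a^3*b*p^3*r + g^3*a^3*b*p^2*q*r + g^3*a^3*b*p^2*r^2 + g^3*a^2*b^3*p^3*q*r - 2*g^3*a^2*b^3*p^3*r^2 + g^3*a^2*b^3*p^3 - g^3*a^2*b^3*p^2*r + 3*g^3*a^2*b^3*p*r^2 - g^3*a^2*b^2*p^3*r + 4*g^3*a^2*b^2*p^2*q*r + 2*g^3*a^2*b*p^3*q*r - g^3*a^2*b*p^3*r^2 + 2*g^3*a^2*b*p^3 - 4*g^3*a^2*b*p^2*r + 2*g^3*a^2*b*p*r^2 - g^3*a^2*p^3*r - g^3*a*b^3*p^3*q + g^3*a*b^3*p^3*r + g^3*a*b^3*p^2*q*r + g^3*a*b^3*p^2*r^2 + g^3*a*b^2*p^3*q*r - g^3*a*b^2*p^3*r^2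 + 2*g^3*a*b^2*p^3 - 4*g^3*a*b^2*p^2*r + 4*g^3*a*b^2*p*r^2 - g^3*a*b*p^3*q + 2*g^3*a*b*p^2*q*r + g^3*a*p^3 - g^3*a*p^2*r - g^3*b*p^2*r + g^3*b*p*r^2 + g^2*lam^2*a^2*b^2*p + 2*g^2*lam^2*a*b*p + g^2*lam^2*p - g^2*lam*a^3*b^3*p^2*r - g^2*lam*a^3*b^2*p*r - 2*g^2*lam*a^3*b*p^2*r + g^2*lam*a^2*b^3*p^2 + g^2*lam*a^2*b^3*p*r + g^2*lam*a^2*b^2*p^2*q - 2*g^2*lam*a^2*b^2*p^2*r + 2*g^2*lam*a^2*b*p^2 - 2*g^2*lam*a^2*b*p*r - g^2*lam*a^2*p^2*r + 2*g^2*lam*a*b^3*p^2*r)"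

definition pD_4 :: "complex \<Rightarrow> complex \<Rightarrow> complex \<Rightarrow> complex \<Rightarrow> complex \<Rightarrow> complex \<Rightarrow> complex \<Rightarrow> complex \<Rightarrow> complex" where
  "pD_4 g lam a b p q r s = (2*g^2*lam*a*b^2*p*r + g^2*lam*a*b*p^2*q + g^2*lam*a*p^2 - g^2*lam*a*p*r - g^2*lam*b*p^2 + g^2*lam*b*p*r + g^2*a^3*b^3*p^3*r^2 - g^2*a^3*b^3*p*r^2 + g^2*a^3*b^2*p^3*r - 2*g^2*a^3*b^2*p^2*q*r - 2*g^2*a^3*b^2*p^2*r^2 - g^2*a^3*b*p^3*q*r + g^2*a^2*b^3*p^3*q - g^2*a^2*b^3*p^3*r - 2*g^2*a^2*b^3*p^2*q*r - 2*g^2*a^2*b^3*p^2*r^2 - 3*g^2*a^2*b^2*p^3*q*r + g^2*a^2*b^2*p^3*r^2 - g^2*a^2*b^2*p^3 + 2*g^2*a^2*b^2*p^2*r - 2*g^2*a^2*b^2*p*r^2 + g^2*a^2*b*p^3*q + g^2*a^2*b*p^3*r - g^2*a^2*b*p^2*q*r - g^2*a^2*b*p^2*r^2 + g^2*a*b^2*p^3*q - g^2*a*b^2*p^3*r - g^2*a*b^2*p^2*q*r - g^2*a*b^2*p^2*r^2 - g^2*a*b*p^3 + 2*g^2*a*b*p^2*r - g^2*a*b*p*r^2 + g*lam*a^3*b^2*p^2*r - 2*g*lam*a^2*b^3*p^2*r - g*lam*a^2*b^2*p^2 - 2*g*lam*a*b^2*p^2*r + g*a^3*b^3*p^2*q*r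 + g*a^3*b^3*p^2*r^2 + 2*g*a^3*b^2*p^3*q*r + g*a^2*b^3*p^3*q*r - g*a^2*b^2*p^3*q + g*a^2*b^2*p^2*q*r + g*a^2*b^2*p^2*r^2 + lam*a^2*b^2*p^2*r - a^3*b^3*p^3*q*r)"

definition pE_0 :: "complex \<Rightarrow> complex \<Rightarrow> complex \<Rightarrow> complex \<Rightarrow> complex \<Rightarrow> complex \<Rightarrow> complex \<Rightarrow> complex \<Rightarrow> complex" where
  "pE_0 g lam a b p q r s = (g^8*a^4*b*p + g^8*a^4*b*r + 2*g^8*a^3*b^2*p + 2*g^8*a^3*b^2*r + g^8*a^2*b^3*p + g^8*a^2*b^3*r + g^7*lam*a^4*b + 2*g^7*lam*a^3*b^2 + g^7*lam*a^2*b^3 - 2*g^7*a^5*b*p - 2*g^7*a^5*b*r - 7*g^7*a^4*b^2*p - 6*g^7*a^4*b^2*r - 2*g^7*a^4*b*p^2 - 3*g^7*a^4*b*p*r - g^7*a^4*p - 6*g^7*a^3*b^3*p - 4*g^7*a^3*b^3*r - 4*g^7*a^3*b^2*p^2 - 6*g^7*a^3*b^2*p*r - 6*g^7*a^3*b*p - 4*g^7*a^3*b*r - g^7*a^2*b^4*p - 2*g^7*a^2*b^3*p^2 - 3*g^7*a^2*b^3*p*r - 7*g^7*a^2*b^2*p - 6*g^7*a^2*b^2*r - 2*g^7*a*b^3*p - 2*g^7*a*b^3*r - 2*g^6*lam*a^5*b - 6*g^6*lam*a^4*b^2 - 2*g^6*lam*a^4*b*p - g^6*lam*a^4 - 4*g^6*lam*a^3*b^3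 - 4*g^6*lam*a^3*b^2*p - 6*g^6*lam*a^3*b - 2*g^6*lam*a^2*b^3*p - 7*g^6*lam*a^2*b^2 - 2*g^6*lam*a*b^3 + g^6*a^6*b*p + g^6*a^6*b*r + 8*g^6*a^5*b^2*p + 6*g^6*a^5*b^2*r + 4*g^6*a^5*b*p^2 + 6*g^6*a^5*b*p*r + 2*g^6*a^5*p + 12*g^6*a^4*b^3*p + 6*g^6*a^4*b^3*r + 14*g^6*a^4*b^2*p^2 + 19*g^6*a^4*b^2*p*r + g^6*a^4*b*p^3 + 3*g^6*a^4*b*p^2*r + 15*g^6*a^4*b*p + 7*g^6*a^4*b*r + 2*g^6*a^4*p^2 + 4*g^6*a^3*b^4*p + 12*g^6*a^3*b^3*p^2 + 14*g^6*a^3*b^3*p*r + 2*g^6*a^3*b^2*p^3 + 6*g^6*a^3*b^2*p^2*r)"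

definition pE_1 :: "complex \<Rightarrow> complex \<Rightarrow> complex \<Rightarrow> complex \<Rightarrow> complex \<Rightarrow> complex \<Rightarrow> complex \<Rightarrow> complex \<Rightarrow> complex" where
  "pE_1 g lam a b p q r s = (28*g^6*a^3*b^2*p + 16*g^6*a^3*b^2*r + 10*g^6*a^3*b*p^2 + 10*g^6*a^3*b*p*r + 4*g^6*a^3*p + 2*g^6*a^2*b^4*p^2 + g^6*a^2*b^4*p*r + g^6*a^2*b^3*p^3 + 3*g^6*a^2*b^3*p^2*r + 15*g^6*a^2*b^3*p + 7*g^6*a^2*b^3*r + 10*g^6*a^2*b^2*p^2 + 14*g^6*a^2*b^2*p*r + 12*g^6*a^2*b*p + 6*g^6*a^2*b*r + 2*g^6*a*b^4*p + 2*g^6*a*b^3*p^2 + 4*g^6*a*b^3*p*r + 8*g^6*a*b^2*p + 6*g^6*a*b^2*r + g^6*b^3*p + g^6*b^3*r + g^5*lam*a^6*b + 6*g^5*lam*a^5*b^2 + 4*g^5*lam*a^5*b*p + 2*g^5*lam*a^5 + 6*g^5*lam*a^4*b^3 + 12*g^5*lam*a^4*b^2*p + g^5*lam*a^4*b*p^2 + 14*g^5*lam*a^4*b + 2*g^5*lam*a^4*p + 8*g^5*lam*a^3*b^3*p + 2*g^5*lam*a^3*b^2*p^2 + 22*g^5*lam*a^3*b^2 + 10*g^5*lam*a^3*b*p + 4*g^5*lam*a^3 + g^5*lam*a^2*b^3*p^2 + 8*g^5*lam*a^2*b^3 + 10*g^5*lam*a^2*b^2*p + 12*g^5*lam*a^2*b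 + 2*g^5*lam*a*b^3*p + 8*g^5*lam*a*b^2 + g^5*lam*b^3 - 3*g^5*a^6*b^2*p - 2*g^5*a^6*b^2*r - 2*g^5*a^6*b*p^2 - 3*g^5*a^6*b*p*r - g^5*a^6*p - 10*g^5*a^5*b^3*p - 4*g^5*a^5*b^3*r - 16*g^5*a^5*b^2*p^2 - 20*g^5*a^5*b^2*p*r - 2*g^5*a^5*b*p^3 - 6*g^5*a^5*b*p^2*r - 12*g^5*a^5*b*p - 2*g^5*a^5*b*r - 4*g^5*a^5*p^2 - 6*g^5*a^4*b^4*p - 24*g^5*a^4*b^3*p^2 - 24*g^5*a^4*b^3*p*r)"

definition pE_2 :: "complex \<Rightarrow> complex \<Rightarrow> complex \<Rightarrow> complex \<Rightarrow> complex \<Rightarrow> complex \<Rightarrow> complex \<Rightarrow> complex \<Rightarrow> complex" where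
  "pE_2 g lam a b p q r s = (0 - 7*g^5*a^4*b^2*p^3 - 20*g^5*a^4*b^2*p^2*r - 38*g^5*a^4*b^2*p - 12*g^5*a^4*b^2*r - g^5*a^4*b*p^3*r - 26*g^5*a^4*b*p^2 - 18*g^5*a^4*b*p*r - g^5*a^4*p^3 - 8*g^5*a^4*p - 8*g^5*a^3*b^4*p^2 - 4*g^5*a^3*b^4*p*r - 6*g^5*a^3*b^3*p^3 - 16*g^5*a^3*b^3*p^2*r - 34*g^5*a^3*b^3*p - 8*g^5*a^3*b^3*r - 2*g^5*a^3*b^2*p^3*r - 42*g^5*a^3*b^2*p^2 - 42*g^5*a^3*b^2*p*r - 4*g^5*a^3*b*p^3 - 8*g^5*a^3*b*p^2*r - 34*g^5*a^3*b*p - 8*g^5*a^3*b*r - 6*g^5*a^3*p^2 - g^5*a^2*b^4*p^3 - 2*g^5*a^2*b^4*p^2*r - 8*g^5*a^2*b^4*p - g^5*a^2*b^3*p^3*r - 18*g^5*a^2*b^3*p^2 - 20*g^5*a^2*b^3*p*r - 3*g^5*a^2*b^2*p^3 - 10*g^5*a^2*b^2*p^2*r - 38*g^5*a^2*b^2*p - 12*g^5*a^2*b^2*r - 14*g^5*a^2*b*p^2 - 12*g^5*a^2*b*p*r - 6*g^5*a^2*p - 2*g^5*a*b^4*p^2 - 2*g^5*a*b^4*p*r - 2*g^5*a*b^3*p^2*r - 12*g^5*a*b^3*p - 2*g^5*a*b^3*r - 6*g^5*a*b^2*p^2 - 10*g^5*a*b^2*p*r - 10*g^5*a*b*p - 4*g^5*a*b*r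 - g^5*b^4*p - g^5*b^3*p*r - 3*g^5*b^2*p - 2*g^5*b^2*r - 2*g^4*lam*a^6*b^2 - 2*g^4*lam*a^6*b*p - g^4*lam*a^6 - 4*g^4*lam*a^5*b^3 - 12*g^4*lam*a^5*b^2*p - 2*g^4*lam*a^5*b*p^2 - 10*g^4*lam*a^5*b - 4*g^4*lam*a^5*p - 12*g^4*lam*a^4*b^3*p - 6*g^4*lam*a^4*b^2*p^2 - 24*g^4*lam*a^4*b^2)"

definition pE_3 :: "complex \<Rightarrow> complex \<Rightarrow> complex \<Rightarrow> complex \<Rightarrow> complex \<Rightarrow> complex \<Rightarrow> complex \<Rightarrow> complex \<Rightarrow> complex" where
  "pE_3 g lam a b p q r s = (0 - 24*g^4*lam*a^4*b*p - g^4*lam*a^4*p^2 - 8*g^4*lam*a^4 - 4*g^4*lam*a^3*b^3*p^2 - 12*g^4*lam*a^3*b^3 - 32*g^4*lam*a^3*b^2*p - 4*g^4*lam*a^3*b*p^2 - 30*g^4*lam*a^3*b - 6*g^4*lam*a^3*p - 8*g^4*lam*a^2*b^3*p - 3*g^4*lam*a^2*b^2*p^2 - 26*g^4*lam*a^2*b^2 - 14*g^4*lam*a^2*b*p - 6*g^4*lam*a^2 - 4*g^4*lam*a*b^3 - 6*g^4*lam*a*b^2*p - 10*g^4*lam*a*b - 3*g^4*lam*b^2 + 3*g^4*a^6*b^3*p + g^4*a^6*b^3*r + 6*g^4*a^6*b^2*p^2 + 7*g^4*a^6*b^2*p*r + g^4*a^6*b*p^3 + 3*g^4*a^6*b*p^2*r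 + 3*g^4*a^6*b*p - g^4*a^6*b*r + 2*g^4*a^6*p^2 + 4*g^4*a^5*b^4*p + 20*g^4*a^5*b^3*p^2 + 18*g^4*a^5*b^3*p*r + 8*g^4*a^5*b^2*p^3 + 22*g^4*a^5*b^2*p^2*r + 20*g^4*a^5*b^2*p + 2*g^4*a^5*b*p^3*r + 22*g^4*a^5*b*p^2 + 6*g^4*a^5*b*p*r + 2*g^4*a^5*p^3 + 4*g^4*a^5*p + 12*g^4*a^4*b^4*p^2 + 6*g^4*a^4*b^4*p*r + 12*g^4*a^4*b^3*p^3 + 30*g^4*a^4*b^3*p^2*r + 32*g^4*a^4*b^3*p + 2*g^4*a^4*b^3*r + 7*g^4*a^4*b^2*p^3*r + 60*g^4*a^4*b^2*p^2 + 38*g^4*a^4*b^2*p*r + 11*g^4*a^4*b*p^3 + 15*g^4*a^4*b*p^2*r + 32*g^4*a^4*b*p - 2*g^4*a^4*b*r + 12*g^4*a^4*p^2 + 4*g^4*a^3*b^4*p^3 + 8*g^4*a^3*b^4*p^2*r + 12*g^4*a^3*b^4*p + 6*g^4*a^3*b^3*p^3*r + 44*g^4*a^3*b^3*p^2 + 34*g^4*a^3*b^3*p*r + 14*g^4*a^3*b^2*p^3 + 34*g^4*a^3*b^2*p^2*r)"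

definition pE_4 :: "complex \<Rightarrow> complex \<Rightarrow> complex \<Rightarrow> complex \<Rightarrow> complex \<Rightarrow> complex \<Rightarrow> complex \<Rightarrow> complex \<Rightarrow> complex" where
  "pE_4 g lam a b p q r s = (60*g^4*a^3*b^2*p + 2*g^4*a^3*b*p^3*r + 42*g^4*a^3*b*p^2 + 18*g^4*a^3*b*p*r + 2*g^4*a^3*p^3 + 12*g^4*a^3*p + g^4*a^2*b^4*p^3*r + 8*g^4*a^2*b^4*p^2 + 8*g^4*a^2*b^4*p*r + 3*g^4*a^2*b^3*p^3 + 15*g^4*a^2*b^3*p^2*r + 32*g^4*a^2*b^3*p - 2*g^4*a^2*b^3*r + 2*g^4*a^2*b^2*p^3*r + 34*g^4*a^2*b^2*p^2 + 28*g^4*a^2*b^2*p*r + 3*g^4*a^2*b*p^3 + 7*g^4*a^2*b*p^2*r + 32*g^4*a^2*b*p + 2*g^4*a^2*b*r + 6*g^4*a^2*p^2 + 2*g^4*a*b^4*p^2*r + 4*g^4*a*b^4*p + 6*g^4*a*b^3*p^2 + 8*g^4*a*b^3*p*r + 4*g^4*a*b^2*p^2*r + 20*g^4*a*b^2*p + 6*g^4*a*b*p^2 + 6*g^4*a*b*p*r + 4*g^4*a*p + g^4*b^4*p*r + 3*g^4*b^3*p - g^4*b^3*r + 2*g^4*b^2*p*r + 3*g^4*b*p + g^4*b*r + g^3*lam*a^6*b^3 + 4*g^3*lam*a^6*b^2*p + g^3*lam*a^6*b*p^2 + 2*g^3*lam*a^6*b + 2*g^3*lam*a^6*p + 8*g^3*lam*a^5*b^3*p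 + 6*g^3*lam*a^5*b^2*p^2 + 10*g^3*lam*a^5*b^2 + 18*g^3*lam*a^5*b*p + 2*g^3*lam*a^5*p^2 + 4*g^3*lam*a^5 + 6*g^3*lam*a^4*b^3*p^2 + 8*g^3*lam*a^4*b^3 + 36*g^3*lam*a^4*b^2*p + 10*g^3*lam*a^4*b*p^2 + 24*g^3*lam*a^4*b + 12*g^3*lam*a^4*p + 12*g^3*lam*a^3*b^3*p + 10*g^3*lam*a^3*b^2*p^2 + 30*g^3*lam*a^3*b^2 + 36*g^3*lam*a^3*b*p + 2*g^3*lam*a^3*p^2 + 12*g^3*lam*a^3 + 6*g^3*lam*a^2*b^3)"

definition pE_5 :: "complex \<Rightarrow> complex \<Rightarrow> complex \<Rightarrow> complex \<Rightarrow> complex \<Rightarrow> complex \<Rightarrow> complex \<Rightarrow> complex \<Rightarrow> complex" where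
  "pE_5 g lam a b p q r s = (20*g^3*lam*a^2*b^2*p + 3*g^3*lam*a^2*b*p^2 + 26*g^3*lam*a^2*b + 6*g^3*lam*a^2*p + 10*g^3*lam*a*b^2 + 6*g^3*lam*a*b*p + 4*g^3*lam*a + 3*g^3*lam*b - g^3*a^6*b^4*p - 6*g^3*a^6*b^3*p^2 - 5*g^3*a^6*b^3*p*r - 3*g^3*a^6*b^2*p^3 - 8*g^3*a^6*b^2*p^2*r - 3*g^3*a^6*b^2*p + 2*g^3*a^6*b^2*r - g^3*a^6*b*p^3*r - 6*g^3*a^6*b*p^2 + 2*g^3*a^6*b*p*r - g^3*a^6*p^3 - 8*g^3*a^5*b^4*p^2 - 4*g^3*a^5*b^4*p*r - 10*g^3*a^5*b^3*p^3 - 24*g^3*a^5*b^3*p^2*r - 12*g^3*a^5*b^3*p + 2*g^3*a^5*b^3*r - 8*g^3*a^5*b^2*p^3*r - 34*g^3*a^5*b^2*p^2 - 6*g^3*a^5*b^2*p*r - 10*g^3*a^5*b*p^3 - 6*g^3*a^5*b*p^2*r - 10*g^3*a^5*b*p + 4*g^3*a^5*b*r - 6*g^3*a^5*p^2 - 6*g^3*a^4*b^4*p^3 - 12*g^3*a^4*b^4*p^2*r - 8*g^3*a^4*b^4*p - 12*g^3*a^4*b^3*p^3*r - 44*g^3*a^4*b^3*p^2 - 22*g^3*a^4*b^3*p*r - 22*g^3*a^4*b^2*p^3 - 36*g^3*a^4*b^2*p^2*r - 38*g^3*a^4*b^2*p + 12*g^3*a^4*b^2*r - 4*g^3*a^4*b*p^3*r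 - 42*g^3*a^4*b*p^2 - 4*g^3*a^4*p^3 - 6*g^3*a^4*p - 4*g^3*a^3*b^4*p^3*r - 12*g^3*a^3*b^4*p^2 - 12*g^3*a^3*b^4*p*r - 10*g^3*a^3*b^3*p^3 - 32*g^3*a^3*b^3*p^2*r - 34*g^3*a^3*b^3*p + 8*g^3*a^3*b^3*r - 8*g^3*a^3*b^2*p^3*r - 60*g^3*a^3*b^2*p^2 - 18*g^3*a^3*b^2*p*r - 10*g^3*a^3*b*p^3 - 12*g^3*a^3*b*p^2*r - 34*g^3*a^3*b*p)"

definition pE_6 :: "complex \<Rightarrow> complex \<Rightarrow> complex \<Rightarrow> complex \<Rightarrow> complex \<Rightarrow> complex \<Rightarrow> complex \<Rightarrow> complex \<Rightarrow> complex" where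
  "pE_6 g lam a b p q r s = (8*g^3*a^3*b*r - 12*g^3*a^3*p^2 - 8*g^3*a^2*b^4*p^2*r - 6*g^3*a^2*b^4*p - 2*g^3*a^2*b^3*p^3*r - 20*g^3*a^2*b^3*p^2 - 16*g^3*a^2*b^3*p*r - 3*g^3*a^2*b^2*p^3 - 16*g^3*a^2*b^2*p^2*r - 38*g^3*a^2*b^2*p + 12*g^3*a^2*b^2*r - g^3*a^2*b*p^3*r - 22*g^3*a^2*b*p^2 - 6*g^3*a^2*b*p*r - g^3*a^2*p^3 - 8*g^3*a^2*p - 4*g^3*a*b^4*p*r - 4*g^3*a*b^3*p^2*r - 10*g^3*a*b^3*p + 4*g^3*a*b^3*r - 6*g^3*a*b^2*p^2 - 6*g^3*a*b^2*p*r - 2*g^3*a*b*p^2*r - 12*g^3*a*b*p + 2*g^3*a*b*r - 2*g^3*a*p^2 - 2*g^3*b^3*p*r - 3*g^3*b^2*p + 2*g^3*b^2*r - g^3*b*p*r - g^3*p - 2*g^2*lam*a^6*b^3*p - 2*g^2*lam*a^6*b^2*p^2 - g^2*lam*a^6*b^2 - 4*g^2*lam*a^6*b*p - g^2*lam*a^6*p^2 - 4*g^2*lam*a^5*b^3*p^2 - 2*g^2*lam*a^5*b^3 - 16*g^2*lam*a^5*b^2*p - 8*g^2*lam*a^5*b*p^2 - 6*g^2*lam*a^5*b - 6*g^2*lam*a^5*p - 8*g^2*lam*a^4*b^3*p - 12*g^2*lam*a^4*b^2*p^2 - 14*g^2*lam*a^4*b^2 - 30*g^2*lam*a^4*b*p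 - 4*g^2*lam*a^4*p^2 - 6*g^2*lam*a^4 - 4*g^2*lam*a^3*b^3 - 24*g^2*lam*a^3*b^2*p - 8*g^2*lam*a^3*b*p^2 - 22*g^2*lam*a^3*b - 12*g^2*lam*a^3*p - 12*g^2*lam*a^2*b^2 - 16*g^2*lam*a^2*b*p - g^2*lam*a^2*p^2 - 8*g^2*lam*a^2 - 8*g^2*lam*a*b - 2*g^2*lam*a*p - g^2*lam)"

definition pE_7 :: "complex \<Rightarrow> complex \<Rightarrow> complex \<Rightarrow> complex \<Rightarrow> complex \<Rightarrow> complex \<Rightarrow> complex \<Rightarrow> complex \<Rightarrow> complex" where
  "pE_7 g lam a b p q r s = (2*g^2*a^6*b^4*p^2 + g^2*a^6*b^4*p*r + 3*g^2*a^6*b^3*p^3 + 7*g^2*a^6*b^3*p^2*r + g^2*a^6*b^3*p - g^2*a^6*b^3*r + 3*g^2*a^6*b^2*p^3*r + 6*g^2*a^6*b^2*p^2 - 4*g^2*a^6*b^2*p*r + 3*g^2*a^6*b*p^3 - g^2*a^6*b*p^2*r + 4*g^2*a^5*b^4*p^3 + 8*g^2*a^5*b^4*p^2*r + 2*g^2*a^5*b^4*p + 10*g^2*a^5*b^3*p^3*r + 18*g^2*a^5*b^3*p^2 + 2*g^2*a^5*b^3*p*r + 14*g^2*a^5*b^2*p^3 + 10*g^2*a^5*b^2*p^2*r + 8*g^2*a^5*b^2*p - 6*g^2*a^5*b^2*r + 2*g^2*a^5*b*p^3*r + 14*g^2*a^5*b*p^2 - 6*g^2*a^5*b*p*r + 2*g^2*a^5*p^3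 + 6*g^2*a^4*b^4*p^3*r + 8*g^2*a^4*b^4*p^2 + 8*g^2*a^4*b^4*p*r + 12*g^2*a^4*b^3*p^3 + 26*g^2*a^4*b^3*p^2*r + 15*g^2*a^4*b^3*p - 7*g^2*a^4*b^3*r + 10*g^2*a^4*b^2*p^3*r + 42*g^2*a^4*b^2*p^2 - 8*g^2*a^4*b^2*p*r + 11*g^2*a^4*b*p^3 + 3*g^2*a^4*b*p^2*r + 12*g^2*a^4*b*p - 6*g^2*a^4*b*r + 6*g^2*a^4*p^2 + 12*g^2*a^3*b^4*p^2*r + 4*g^2*a^3*b^4*p + 6*g^2*a^3*b^3*p^3*r + 24*g^2*a^3*b^3*p^2 + 10*g^2*a^3*b^3*p*r + 8*g^2*a^3*b^2*p^3 + 18*g^2*a^3*b^2*p^2*r + 28*g^2*a^3*b^2*p - 16*g^2*a^3*b^2*r + 2*g^2*a^3*b*p^3*r + 26*g^2*a^3*b*p^2 - 6*g^2*a^3*b*p*r + 2*g^2*a^3*p^3 + 4*g^2*a^3*p + 6*g^2*a^2*b^4*p*r + 12*g^2*a^2*b^3*p^2*r + 12*g^2*a^2*b^3*p - 6*g^2*a^2*b^3*r + g^2*a^2*b^2*p^3*r + 16*g^2*a^2*b^2*p^2)"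

definition pE_8 :: "complex \<Rightarrow> complex \<Rightarrow> complex \<Rightarrow> complex \<Rightarrow> complex \<Rightarrow> complex \<Rightarrow> complex \<Rightarrow> complex \<Rightarrow> complex" where
  "pE_8 g lam a b p q r s = (2*g^2*a^2*b^2*p*r + g^2*a^2*b*p^3 + 3*g^2*a^2*b*p^2*r + 15*g^2*a^2*b*p - 7*g^2*a^2*b*r + 4*g^2*a^2*p^2 + 6*g^2*a*b^3*p*r + 2*g^2*a*b^2*p^2*r + 8*g^2*a*b^2*p - 6*g^2*a*b^2*r + 2*g^2*a*b*p^2 + 2*g^2*a*p + g^2*b^2*p*r + g^2*b*p - g^2*b*r + g*lam*a^6*b^3*p^2 + 2*g*lam*a^6*b^2*p + 2*g*lam*a^6*b*p^2 + 2*g*lam*a^5*b^3*p + 6*g*lam*a^5*b^2*p^2 + 2*g*lam*a^5*b^2 + 8*g*lam*a^5*b*p + 2*g*lam*a^5*p^2 + g*lam*a^4*b^3 + 12*g*lam*a^4*b^2*p + 7*g*lam*a^4*b*p^2 + 6*g*lam*a^4*b + 6*g*lam*a^4*p + 6*g*lam*a^3*b^2 + 14*g*lam*a^3*b*p + 2*g*lam*a^3*p^2 + 4*g*lam*a^3 + 7*g*lam*a^2*b + 4*g*lam*a^2*p + 2*g*lam*a - g*a^6*b^4*p^3 - 2*g*a^6*b^4*p^2*r - 3*g*a^6*b^3*p^3*r - 2*g*a^6*b^3*p^2 + 2*g*a^6*b^3*p*r - 3*g*a^6*b^2*p^3 + 2*g*a^6*b^2*p^2*r - 4*g*a^5*b^4*p^3*r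 - 2*g*a^5*b^4*p^2 - 2*g*a^5*b^4*p*r - 6*g*a^5*b^3*p^3 - 6*g*a^5*b^3*p^2*r - 2*g*a^5*b^3*p + 2*g*a^5*b^3*r - 4*g*a^5*b^2*p^3*r - 10*g*a^5*b^2*p^2 + 8*g*a^5*b^2*p*r - 4*g*a^5*b*p^3 + 2*g*a^5*b*p^2*r - 8*g*a^4*b^4*p^2*r - g*a^4*b^4*p - 6*g*a^4*b^3*p^3*r - 12*g*a^4*b^3*p^2 + g*a^4*b^3*p*r - 7*g*a^4*b^2*p^3)"

definition pE_9 :: "complex \<Rightarrow> complex \<Rightarrow> complex \<Rightarrow> complex \<Rightarrow> complex \<Rightarrow> complex \<Rightarrow> complex \<Rightarrow> complex \<Rightarrow> complex" where
  "pE_9 g lam a b p q r s = (0 - 4*g*a^4*b^2*p^2*r - 7*g*a^4*b^2*p + 6*g*a^4*b^2*r - g*a^4*b*p^3*r - 10*g*a^4*b*p^2 + 6*g*a^4*b*p*r - g*a^4*p^3 - 4*g*a^3*b^4*p*r - 12*g*a^3*b^3*p^2*r - 6*g*a^3*b^3*p + 4*g*a^3*b^3*r - 2*g*a^3*b^2*p^3*r - 14*g*a^3*b^2*p^2 + 6*g*a^3*b^2*p*r - 2*g*a^3*b*p^3 - 6*g*a^3*b*p + 4*g*a^3*b*r - 2*g*a^3*p^2 - 6*g*a^2*b^3*p*r - 4*g*a^2*b^2*p^2*r - 7*g*a^2*b^2*p + 6*g*a^2*b^2*r - 4*g*a^2*b*p^2 + 3*g*a^2*b*p*r - g*a^2*p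 - 2*g*a*b^2*p*r - 2*g*a*b*p + 2*g*a*b*r - lam*a^6*b^2*p^2 - 2*lam*a^5*b^2*p - 2*lam*a^5*b*p^2 - lam*a^4*b^2 - 4*lam*a^4*b*p - lam*a^4*p^2 - 2*lam*a^3*b - 2*lam*a^3*p - lam*a^2 + a^6*b^4*p^3*r + a^6*b^3*p^3 - a^6*b^3*p^2*r + 2*a^5*b^4*p^2*r + 2*a^5*b^3*p^3*r + 2*a^5*b^3*p^2 - 2*a^5*b^3*p*r + 2*a^5*b^2*p^3 - 2*a^5*b^2*p^2*r + a^4*b^4*p*r + 4*a^4*b^3*p^2*r + a^4*b^3*p - a^4*b^3*r + a^4*b^2*p^3*r + 4*a^4*b^2*p^2 - 4*a^4*b^2*p*r + a^4*b*p^3 - a^4*b*p^2*r + 2*a^3*b^3*p*r + 2*a^3*b^2*p^2*r + 2*a^3*b^2*p - 2*a^3*b^2*r + 2*a^3*b*p^2)"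

definition pE_10 :: "complex \<Rightarrow> complex \<Rightarrow> complex \<Rightarrow> complex \<Rightarrow> complex \<Rightarrow> complex \<Rightarrow> complex \<Rightarrow> complex \<Rightarrow> complex" where
  "pE_10 g lam a b p q r s = (0 - 2*a^3*b*p*r + a^2*b^2*p*r + a^2*b*p - a^2*b*r)"

definition pL_0 :: "complex \<Rightarrow> complex \<Rightarrow> complex \<Rightarrow> complex \<Rightarrow> complex \<Rightarrow> complex \<Rightarrow> complex \<Rightarrow> complex \<Rightarrow> complex" where
  "pL_0 g lam a b p q r s = (g^6*a^3*b + 2*g^6*a^2*b^2 + g^6*a*b^3 - 2*g^5*a^3*b^2 - 2*g^5*a^3*b*p - 2*g^5*a^3*b*r - g^5*a^3 - 2*g^5*a^2*b^3 - 4*g^5*a^2*b^2*p - 4*g^5*a^2*b^2*r - 5*g^5*a^2*b - 2*g^5*a*b^3*p - 2*g^5*a*b^3*r - 5*g^5*a*b^2 - g^5*b^3 - g^4*lam*a^3*b - 2*g^4*lam*a^2*b^2 - g^4*lam*a*b^3 + g^4*a^4*b*r + g^4*a^3*b^3 + 5*g^4*a^3*b^2*p + 6*g^4*a^3*b^2*r + 2*g^4*a^3*b*p*r + g^4*a^3*b + 2*g^4*a^3*p + g^4*a^3*r + 6*g^4*a^2*b^3*p + 5*g^4*a^2*b^3*r + 4*g^4*a^2*b^2*p*r + 4*g^4*a^2*b^2 + 9*g^4*a^2*b*p + 8*g^4*a^2*b*r + 3*g^4*a^2 + g^4*a*b^4*p + 2*g^4*a*b^3*p*r + g^4*a*b^3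 + 8*g^4*a*b^2*p + 9*g^4*a*b^2*r + 7*g^4*a*b + g^4*b^3*p + 2*g^4*b^3*r + 3*g^4*b^2 + 2*g^3*lam*a^3*b^2 + g^3*lam*a^3 + 2*g^3*lam*a^2*b^3 + 5*g^3*lam*a^2*b + 5*g^3*lam*a*b^2 + g^3*lam*b^3 - 2*g^3*a^4*b^2*r - g^3*a^4*b*p*r - g^3*a^4*r - 4*g^3*a^3*b^3*p - 4*g^3*a^3*b^3*r - 7*g^3*a^3*b^2*p*r + g^3*a^3*b^2 - 4*g^3*a^3*b*p - 6*g^3*a^3*b*r - g^3*a^3*p*r + g^3*a^3 - 2*g^3*a^2*b^4*p)"

definition pL_1 :: "complex \<Rightarrow> complex \<Rightarrow> complex \<Rightarrow> complex \<Rightarrow> complex \<Rightarrow> complex \<Rightarrow> complex \<Rightarrow> complex \<Rightarrow> complex" where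
  "pL_1 g lam a b p q r s = (0 - 7*g^3*a^2*b^3*p*r + g^3*a^2*b^3 - 13*g^3*a^2*b^2*p - 13*g^3*a^2*b^2*r - 7*g^3*a^2*b*p*r + g^3*a^2*b - 5*g^3*a^2*p - 3*g^3*a^2*r - g^3*a*b^4*p*r - 6*g^3*a*b^3*p - 4*g^3*a*b^3*r - 7*g^3*a*b^2*p*r + g^3*a*b^2 - 10*g^3*a*b*p - 10*g^3*a*b*r - 3*g^3*a - g^3*b^4*p - g^3*b^3*p*r + g^3*b^3 - 3*g^3*b^2*p - 5*g^3*b^2*r - 3*g^3*b - g^2*lam*a^3*b^3 - 2*g^2*lam*a^3*b - 6*g^2*lam*a^2*b^2 - 3*g^2*lam*a^2 - 2*g^2*lam*a*b^3 - 7*g^2*lam*a*b - 3*g^2*lam*b^2 + g^2*a^4*b^3*r + 2*g^2*a^4*b^2*p*r + 2*g^2*a^4*b*r + g^2*a^4*p*r + g^2*a^3*b^4*p + 6*g^2*a^3*b^3*p*r - g^2*a^3*b^3 + 2*g^2*a^3*b^2*p + 5*g^2*a^3*b^2*r + 6*g^2*a^3*b*p*r - 2*g^2*a^3*b - g^2*a^3*p + 3*g^2*a^3*r + 2*g^2*a^2*b^4*p*r + 5*g^2*a^2*b^3*p + 2*g^2*a^2*b^3*r + 14*g^2*a^2*b^2*p*r - 5*g^2*a^2*b^2 + 5*g^2*a^2*b*p + 8*g^2*a^2*b*r + 2*g^2*a^2*p*r - 3*g^2*a^2 + 2*g^2*a*b^4*p + 6*g^2*a*b^3*p*r - 2*g^2*a*b^3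 + 8*g^2*a*b^2*p + 5*g^2*a*b^2*r + 6*g^2*a*b*p*r - 5*g^2*a*b + 4*g^2*a*p + 3*g^2*a*r)"

definition pL_2 :: "complex \<Rightarrow> complex \<Rightarrow> complex \<Rightarrow> complex \<Rightarrow> complex \<Rightarrow> complex \<Rightarrow> complex \<Rightarrow> complex \<Rightarrow> complex" where
  "pL_2 g lam a b p q r s = (g^2*b^4*p*r + 3*g^2*b^3*p - g^2*b^3*r + 2*g^2*b^2*p*r - 3*g^2*b^2 + 3*g^2*b*p + 4*g^2*b*r + g^2 + g*lam*a^3*b^2 + g*lam*a^2*b^3 + 4*g*lam*a^2*b + 4*g*lam*a*b^2 + 3*g*lam*a + 3*g*lam*b - g*a^4*b^3*p*r - g*a^4*b^2*r - 2*g*a^4*b*p*r - g*a^3*b^4*p*r - 5*g*a^3*b^2*p*r + g*a^3*b^2 + 2*g*a^3*b*p - 4*g*a^3*b*r - 2*g*a^3*p*r - g*a^2*b^4*p - 5*g*a^2*b^3*p*r + g*a^2*b^3 - g*a^2*b^2*p - g*a^2*b^2*r - 5*g*a^2*b*p*r + 4*g*a^2*b + 2*g*a^2*p - 3*g*a^2*r - 2*g*a*b^4*p*r - 4*g*a*b^3*p + 2*g*a*b^3*r - 5*g*a*b^2*p*r + 4*g*a*b^2 - 2*g*a*b*p - 2*g*a*b*r - g*a*p*r + 3*g*a - 2*g*b^3*p*r - 3*g*b^2*p + 2*g*b^2*r - g*b*p*r + 3*g*b - g*p - g*r - lam*a^2*b^2 - 2*lam*a*b - lam + a^4*b^2*p*r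 - a^3*b^2*p + a^3*b^2*r + 2*a^3*b*p*r + a^2*b^4*p*r + a^2*b^3*p - a^2*b^3*r - a^2*b^2 - 2*a^2*b*p)"

definition pL_3 :: "complex \<Rightarrow> complex \<Rightarrow> complex \<Rightarrow> complex \<Rightarrow> complex \<Rightarrow> complex \<Rightarrow> complex \<Rightarrow> complex \<Rightarrow> complex" where
  "pL_3 g lam a b p q r s = (2*a^2*b*r + a^2*p*r + 2*a*b^3*p*r + 2*a*b^2*p - 2*a*b^2*r - 2*a*b - a*p + a*r + b^2*p*r + b*p - b*r - 1)"

definition pM_0 :: "complex \<Rightarrow> complex \<Rightarrow> complex \<Rightarrow> complex \<Rightarrow> complex \<Rightarrow> complex \<Rightarrow> complex \<Rightarrow> complex \<Rightarrow> complex" where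
  "pM_0 g lam a b p q r s = (g^7*a^4*b + 2*g^7*a^3*b^2 + g^7*a^2*b^3 - 2*g^6*a^4*b^2 - g^6*a^4*b*p - 2*g^6*a^4*b*r - g^6*a^4 - 2*g^6*a^3*b^3 - 2*g^6*a^3*b^2*p - 4*g^6*a^3*b^2*r - 4*g^6*a^3*b - g^6*a^2*b^3*p - 2*g^6*a^2*b^3*r - 3*g^6*a^2*b^2 + g^5*a^5*b*r + g^5*a^4*b^3 + 3*g^5*a^4*b^2*p + 6*g^5*a^4*b^2*r + 2*g^5*a^4*b*p*r + g^5*a^4*b*r^2 + g^5*a^4*p + g^5*a^4*r + 4*g^5*a^3*b^3*p + 5*g^5*a^3*b^3*r + 4*g^5*a^3*b^2*p*r + 2*g^5*a^3*b^2*r^2 + 4*g^5*a^3*b*p + 6*g^5*a^3*b*r + 2*g^5*a^3 + g^5*a^2*b^4*p + 2*g^5*a^2*b^3*p*r + g^5*a^2*b^3*r^2 - 2*g^5*a^2*b^3 + 3*g^5*a^2*b^2*p + 5*g^5*a^2*b^2*r + 3*g^5*a^2*b - 2*g^4*a^5*b^2*r - g^4*a^5*b*p*r - g^4*a^5*b*r^2 - g^4*a^5*r - 3*g^4*a^4*b^3*p - 4*g^4*a^4*b^3*r - 8*g^4*a^4*b^2*p*r - 4*g^4*a^4*b^2*r^2 + 3*g^4*a^4*b^2 - g^4*a^4*b*p*r^2 - 2*g^4*a^4*b*p - 3*g^4*a^4*b*r - g^4*a^4*p*r + 2*g^4*a^4 - 2*g^4*a^3*b^4*p - 9*g^4*a^3*b^3*p*r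 - 3*g^4*a^3*b^3*r^2 + 4*g^4*a^3*b^3 - 2*g^4*a^3*b^2*p*r^2 - 6*g^4*a^3*b^2*p - 3*g^4*a^3*b^2*r - 6*g^4*a^3*b*p*r - 2*g^4*a^3*b*r^2 + 6*g^4*a^3*b)"

definition pM_1 :: "complex \<Rightarrow> complex \<Rightarrow> complex \<Rightarrow> complex \<Rightarrow> complex \<Rightarrow> complex \<Rightarrow> complex \<Rightarrow> complex \<Rightarrow> complex" where
  "pM_1 g lam a b p q r s = (0 - 2*g^4*a^3*p - 2*g^4*a^3*r - 2*g^4*a^2*b^4*p*r - g^4*a^2*b^3*p*r^2 - 2*g^4*a^2*b^3*p + 3*g^4*a^2*b^3*r - 5*g^4*a^2*b^2*p*r - 2*g^4*a^2*b^2*r^2 + 6*g^4*a^2*b^2 - 3*g^4*a^2*b*p - 4*g^4*a^2*b*r - g^4*a^2 + g^3*a^5*b^3*r + 3*g^3*a^5*b^2*p*r + 2*g^3*a^5*b^2*r^2 + g^3*a^5*b*p*r^2 + g^3*a^5*b*r + g^3*a^5*p*r + g^3*a^4*b^4*p + 10*g^3*a^4*b^3*p*r + 3*g^3*a^4*b^3*r^2 - 2*g^3*a^4*b^3 + 5*g^3*a^4*b^2*p*r^2 - 3*g^3*a^4*b^2*r + 6*g^3*a^4*b*p*r + g^3*a^4*b*r^2 - 3*g^3*a^4*b - g^3*a^4*p + g^3*a^4*r + 5*g^3*a^3*b^4*p*r + 5*g^3*a^3*b^3*p*r^2 - 7*g^3*a^3*b^3*r + 13*g^3*a^3*b^2*p*r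 + 2*g^3*a^3*b^2*r^2 - 6*g^3*a^3*b^2 + 2*g^3*a^3*b*p*r^2 - 3*g^3*a^3*b*r + 2*g^3*a^3*p*r - 4*g^3*a^3 + g^3*a^2*b^4*p*r^2 - g^3*a^2*b^4*p + 4*g^3*a^2*b^3*p*r - g^3*a^2*b^3*r^2 + g^3*a^2*b^3 + 2*g^3*a^2*b^2*p*r^2 - 7*g^3*a^2*b^2*r + 4*g^3*a^2*b*p*r + g^3*a^2*b*r^2 - 6*g^3*a^2*b + g^3*a^2*p + g^3*a^2*r - 3*g^2*a^5*b^3*p*r - g^2*a^5*b^3*r^2 - 3*g^2*a^5*b^2*p*r^2 + g^2*a^5*b^2*r - 3*g^2*a^5*b*p*r + g^2*a^5*b*r^2 + g^2*a^5*r - 4*g^2*a^4*b^4*p*r - 7*g^2*a^4*b^3*p*r^2)"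

definition pM_2 :: "complex \<Rightarrow> complex \<Rightarrow> complex \<Rightarrow> complex \<Rightarrow> complex \<Rightarrow> complex \<Rightarrow> complex \<Rightarrow> complex \<Rightarrow> complex" where
  "pM_2 g lam a b p q r s = (2*g^2*a^4*b^3*p + 5*g^2*a^4*b^3*r - 8*g^2*a^4*b^2*p*r + 2*g^2*a^4*b^2*r^2 - 2*g^2*a^4*b*p*r^2 + 3*g^2*a^4*b*p + 3*g^2*a^4*b*r - 2*g^2*a^4*p*r - g^2*a^4 - 3*g^2*a^3*b^4*p*r^2 + 2*g^2*a^3*b^4*p - 5*g^2*a^3*b^3*p*r + 3*g^2*a^3*b^3*r^2 - 2*g^2*a^3*b^3 - 6*g^2*a^3*b^2*p*r^2 + 6*g^2*a^3*b^2*p + 9*g^2*a^3*b^2*r - 5*g^2*a^3*b*p*r + g^2*a^3*b*r^2 + 2*g^2*a^3*p + g^2*a^3*r + g^2*a^2*b^4*p*r - 2*g^2*a^2*b^3*p*r^2 + 3*g^2*a^2*b^3*p - g^2*a^2*b^3*r - 2*g^2*a^2*b^2*p*r + 2*g^2*a^2*b^2*r^2 - 3*g^2*a^2*b^2 - g^2*a^2*b*p*r^2 + 2*g^2*a^2*b*p + 5*g^2*a^2*b*r - g^2*a^2*p*r + 2*g^2*a^2 + g*a^5*b^4*p*r + 3*g*a^5*b^3*p*r^2 - g*a^5*b^3*r + 3*g*a^5*b^2*p*r - 2*g*a^5*b^2*r^2 - 2*g*a^5*b*r + 3*g*a^4*b^4*p*r^2 - g*a^4*b^4*p + 2*g*a^4*b^3*p*r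 - 3*g*a^4*b^3*r^2 + g*a^4*b^3 + 4*g*a^4*b^2*p*r^2 - 3*g*a^4*b^2*p - 3*g*a^4*b^2*r + 4*g*a^4*b*p*r - 2*g*a^4*b*r^2 + 2*g*a^4*b - 2*g*a^4*r - 2*g*a^3*b^4*p*r + 4*g*a^3*b^3*p*r^2 - 4*g*a^3*b^3*p + 2*g*a^3*b^3*r + g*a^3*b^2*p*r - 4*g*a^3*b^2*r^2 + 4*g*a^3*b^2 + g*a^3*b*p*r^2 - 4*g*a^3*b*p)"

definition pM_3 :: "complex \<Rightarrow> complex \<Rightarrow> complex \<Rightarrow> complex \<Rightarrow> complex \<Rightarrow> complex \<Rightarrow> complex \<Rightarrow> complex \<Rightarrow> complex" where
  "pM_3 g lam a b p q r s = (0 - 3*g*a^3*b*r + g*a^3*p*r + 2*g*a^3 - 2*g*a^2*b^3*p*r + g*a^2*b^2*p*r^2 - 3*g*a^2*b^2*p + 2*g*a^2*b^2*r - g*a^2*b*r^2 + 3*g*a^2*b - g*a^2*p - g*a^2*r - a^5*b^4*p*r^2 - a^5*b^3*p*r + a^5*b^3*r^2 + a^5*b^2*r + a^4*b^4*p*r - 2*a^4*b^3*p*r^2 + a^4*b^3*p - a^4*b^3*r - 2*a^4*b^2*p*r + 2*a^4*b^2*r^2 - a^4*b^2 + 2*a^4*b*r + 2*a^3*b^3*p*r - a^3*b^2*p*r^2 + 2*a^3*b^2*p - 2*a^3*b^2*r - a^3*b*p*r + a^3*b*r^2 - 2*a^3*b + a^3*r + a^2*b^2*p*r + a^2*b*p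 - a^2*b*r - a^2)"

lemma id1: "((g-b)*a*r)^2 * (g^2 * (p - s) * (q - r) * (lam + p*q) * (lam + r* s) - (1 - g^2) * (g^2 - lam) * (p*q - r* s)^2 + g * (1 - g^2) * (p*q - r* s) * ((lam + p*q) * (r + s) - (p + q) * (lam + r* s))) = r*(lam+g*r)*(pY_0 g lam a b p q r s + pY_1 g lam a b p q r s + pY_2 g lam a b p q r s + pY_3 g lam a b p q r s) + (pC_0 g lam a b p q r s + pC_1 g lam a b p q r s + pC_2 g lam a b p q r s) * ((1 - g * b) * (lam + g * r) - (g - b) * (g - s) * a * r)"
  for g lam a b p q r s :: complex unfolding pY_0_def pY_1_def pY_2_def pY_3_def pC_0_def pC_1_def pC_2_def by algebra
lemma id2: "((g-a)*b*p)^2 * (pY_0 g lam a b p q r s + pY_1 g lam a b p q r s + pY_2 g lam a b p q r s + pY_3 g lam a b p q r s) = p*g*g*(lam+g*p)*(pZ_0 g lam a b p q r s + pZ_1 g lam a b p q r s + pZ_2 g lam a b p q r s + pZ_3 g lam a b p q r s + pZ_4 g lam a b p q r s + pZ_5 g lam a b p q r s + pZ_6 g lam a b p q r s) + (pD_0 g lam a b p q r s + pD_1 g lam a b p q r s + pD_2 g lam a b p q r s + pD_3 g lam a b p q r s + pD_4 g lam a b p q r s) * ((1 - g * a) * (lam + g * p) - (g - a) * (g - q) * b * p)"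
  for g lam a b p q r s :: complex unfolding pY_0_def pY_1_def pY_2_def pY_3_def pZ_0_def pZ_1_def pZ_2_def pZ_3_def pZ_4_def pZ_5_def pZ_6_def pD_0_def pD_1_def pD_2_def pD_3_def pD_4_def by algebra
lemma id3: "((g-a)*(1-g*a+a*p))^2 * (pZ_0 g lam a b p q r s + pZ_1 g lam a b p q r s + pZ_2 g lam a b p q r s + pZ_3 g lam a b p q r s + pZ_4 g lam a b p q r s + pZ_5 g lam a b p q r s + pZ_6 g lam a b p q r s) = (pE_0 g lam a b p q r s + pE_1 g lam a b p q r s + pE_2 g lam a b p q r s + pE_3 g lam a b p q r s + pE_4 g lam a b p q r s + pE_5 g lam a b p q r s + pE_6 g lam a b p q r s + pE_7 g lam a b p q r s + pE_8 g lam a b p q r s + pE_9 g lam a b p q r s + pE_10 g lam a b p q r s) * ((lam + g * r - a * r) * (1 - g * a + a * p) + (1 - g^2 - lam) * a * p)"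
  for g lam a b p q r s :: complex unfolding pZ_0_def pZ_1_def pZ_2_def pZ_3_def pZ_4_def pZ_5_def pZ_6_def pE_0_def pE_1_def pE_2_def pE_3_def pE_4_def pE_5_def pE_6_def pE_7_def pE_8_def pE_9_def pE_10_def by algebra
lemma id4: "a^2 * (pZ_0 g lam a b p q r s + pZ_1 g lam a b p q r s + pZ_2 g lam a b p q r s + pZ_3 g lam a b p q r s + pZ_4 g lam a b p q r s + pZ_5 g lam a b p q r s + pZ_6 g lam a b p q r s) = a^2 * (pL_0 g lam a b p q r s + pL_1 g lam a b p q r s + pL_2 g lam a b p q r s + pL_3 g lam a b p q r s) * (lam-(1-g^2)) + (pM_0 g lam a b p q r s + pM_1 g lam a b p q r s + pM_2 g lam a b p q r s + pM_3 g lam a b p q r s) * (a*p-(g*a-1))"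
  for g lam a b p q r s :: complex unfolding pZ_0_def pZ_1_def pZ_2_def pZ_3_def pZ_4_def pZ_5_def pZ_6_def pL_0_def pL_1_def pL_2_def pL_3_def pM_0_def pM_1_def pM_2_def pM_3_def by algebra


lemma core:
  fixes g lam a b p q r s :: complex
  assumes na: "a \<noteq> 0" and nb: "b \<noteq> 0" and nga: "g - a \<noteq> 0" and ngb: "g - b \<noteq> 0"
    and nga1: "g*a - 1 \<noteq> 0" and ngb1: "g*b - 1 \<noteq> 0"
    and E4: "(1 - g * a) * (lam + g * p) - (g - a) * (g - q) * b * p = 0"
    and E2: "(1 - g * b) * (lam + g * r) - (g - b) * (g - s) * a * r = 0"
    and E3: "(lam + g * r - a * r) * (1 - g * a + a * p) + (1 - g^2 - lam) * a * p = 0"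
  shows "g^2 * (p - s) * (q - r) * (lam + p*q) * (lam + r* s) - (1 - g^2) * (g^2 - lam) * (p*q - r* s)^2 + g * (1 - g^2) * (p*q - r* s) * ((lam + p*q) * (r + s) - (p + q) * (lam + r* s)) = 0"
proof (cases "p = 0")
  case True
  have h1: "1 - g*a \<noteq> 0" using nga1 by (metis eq_iff_diff_eq_0)
  from E4 True have "(1 - g*a) * lam = 0" by simp
  with h1 have l0: "lam = 0" by simp
  from E3 True l0 have "(g - a) * (1 - g*a) * r = 0" by (simp add: algebra_simps)
  with h1 nga have "r = 0" by simp
  with True l0 show ?thesis by simp
next
  case pn: False
  show ?thesis
  proof (cases "r = 0")
    case True
    have h1: "1 - g*b \<noteq> 0" using ngb1 by (metis eq_iff_diff_eq_0)
    from E2 True have "(1 - g*b) * lam = 0" by simp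
    with h1 have l0: "lam = 0" by simp
    from E3 True l0 have "(1 - g^2) * (a * p) = 0" by (simp add: algebra_simps)
    with na pn have "g^2 = 1" by simp
    with True l0 show ?thesis by simp
  next
    case rn: False
    have Z0: "(pZ_0 g lam a b p q r s + pZ_1 g lam a b p q r s + pZ_2 g lam a b p q r s + pZ_3 g lam a b p q r s + pZ_4 g lam a b p q r s + pZ_5 g lam a b p q r s + pZ_6 g lam a b p q r s) = 0"
    proof (cases "1 - g*a + a*p = 0")
      case False
      have "((g-a)*(1-g*a+a*p))^2 * (pZ_0 g lam a b p q r s + pZ_1 g lam a b p q r s + pZ_2 g lam a b p q r s + pZ_3 g lam a b p q r s + pZ_4 g lam a b p q r s + pZ_5 g lam a b p q r s + pZ_6 g lam a b p q r s) = 0"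
        using id3[of g a p lam b q r s] E3 by simp
      with False nga show ?thesis by simp
    next
      case True
      have "(lam + g * r - a * r) * (1 - g * a + a * p) = 0" using True by simp
      with E3 have "(1 - g^2 - lam) * a * p = 0" by simp
      hence "(1 - g^2 - lam) * (a * p) = 0" by (simp add: mult.assoc)
      with na pn have "1 - g^2 - lam = 0" by simp
      hence l: "lam - (1 - g^2) = 0" by (simp add: algebra_simps)
      have d: "a*p - (g*a - 1) = 0" using True by (simp add: algebra_simps)
      have "a^2 * (pZ_0 g lam a b p q r s + pZ_1 g lam a b p q r s + pZ_2 g lam a b p q r s + pZ_3 g lam a b p q r s + pZ_4 g lam a b p q r s + pZ_5 g lam a b p q r s + pZ_6 g lam a b p q r s) = 0"
        using id4[of a g lam b p q r s] l d by simp
      with na show ?thesis by simp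
    qed
    have "((g-a)*b*p)^2 * (pY_0 g lam a b p q r s + pY_1 g lam a b p q r s + pY_2 g lam a b p q r s + pY_3 g lam a b p q r s) = 0"
      using id2[of g a b p lam q r s] E4 Z0 by simp
    with nga nb pn have Y0: "(pY_0 g lam a b p q r s + pY_1 g lam a b p q r s + pY_2 g lam a b p q r s + pY_3 g lam a b p q r s) = 0" by simp
    have "((g-b)*a*r)^2 * (g^2 * (p - s) * (q - r) * (lam + p*q) * (lam + r* s) - (1 - g^2) * (g^2 - lam) * (p*q - r* s)^2 + g * (1 - g^2) * (p*q - r* s) * ((lam + p*q) * (r + s) - (p + q) * (lam + r* s))) = 0"
      using id1[of g b a r] E2 Y0 by simp
    with ngb na rn show ?thesis by simp
  qed
qed

theorem mainTheorem11:
  fixes g lam :: complex and u v :: "int \<Rightarrow> int \<Rightarrow> complex"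
  assumes nz: "\<And>l m. u l m \<noteq> 0 \<and> g - u l (m+1) \<noteq> 0 \<and> g * u (l+1) m - 1 \<noteq> 0"
    and e1: "\<And>l m. u (l+1) (m+1) / u l m =
        ((g * u l (m+1) - 1) * (g - u (l+1) m)) / ((g - u l (m+1)) * (g * u (l+1) m - 1))"
    and e2: "\<And>l m. (1 - g * u (l+1) m) * (lam + g * v l (m+1))
        - (g - u (l+1) m) * (g - v (l+1) (m+1)) * u l m * v l (m+1) = 0"
    and e3: "\<And>l m. (lam + g * v l (m+1) - u l m * v l (m+1)) * (1 - g * u l m + u l m * v l m)
        + (1 - g\<^sup>2 - lam) * u l m * v l m = 0"
    and e4: "\<And>l m. (1 - g * u l m) * (lam + g * v l m)
        - (g - u l m) * (g - v (l+1) m) * u (l+1) m * v l m = 0"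
  shows "\<And>l m.
    g\<^sup>2 * (v l m - v (l+1) (m+1)) * (v (l+1) m - v l (m+1))
      * (lam + v l m * v (l+1) m) * (lam + v l (m+1) * v (l+1) (m+1))
    - (1 - g\<^sup>2) * (g\<^sup>2 - lam) * (v l m * v (l+1) m - v l (m+1) * v (l+1) (m+1))\<^sup>2
    + g * (1 - g\<^sup>2) * (v l m * v (l+1) m - v l (m+1) * v (l+1) (m+1))
      * ((lam + v l m * v (l+1) m) * (v l (m+1) + v (l+1) (m+1))
         - (v l m + v (l+1) m) * (lam + v l (m+1) * v (l+1) (m+1))) = 0"
proof -
  fix l m
  have a1: "u l m \<noteq> 0" using nz by blast
  have a2: "u (l+1) m \<noteq> 0" using nz by blast
  have a3: "g - u l m \<noteq> 0" using nz[of l "m-1"] by simp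
  have a4: "g - u (l+1) m \<noteq> 0" using nz[of "l+1" "m-1"] by simp
  have a5: "g * u l m - 1 \<noteq> 0" using nz[of "l-1" m] by simp
  have a6: "g * u (l+1) m - 1 \<noteq> 0" using nz by blast
  show "?thesis l m"
    using core[OF a1 a2 a3 a4 a5 a6 e4[of l m] e2[of l m] e3[of l m]] .
qed

end
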